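(* Let $p$ be a prime, $n>1$, and let $C\in\mathbb{L}_p^{n\times n}$ be a matrix in rational canonical form. Then the linear cellular automaton over $(\mathbb{Z}/p\mathbb{Z})^n$ with associated matrix $C$ is positively expansive if and only if $C$ is expansive.
   Context: $\mathbb{L}_p=\mathbb{Z}/p\mathbb{Z}[X,X^{-1}]$. The companion matrix of a monic $\pi(t)=\beta_0+\dots+\beta_{d-1}t^{d-1}+t^d$ is the $d\times d$ matrix with ones on the subdiagonal, last column $(-\beta_0,\dots,-\beta_{d-1})^T$, zeros elsewhere. $C$ is in rational canonical form if it is block diagonal with diagonal blocks the companion matrices $C_{\pi_1},\dots,C_{\pi_s}$ of monic polynomials $\pi_i$ of positive degree with $\pi_i\mid\pi_j$ for $i\le j$. The linear cellular automaton over $(\mathbb{Z}/p\mathbb{Z})^n$ with associated matrix $\sum_{j=-r}^rA_jX^{-j}$ is the map $\mathcal{F}(c)_i=\sum_{j=-r}^rA_jc_{i+j}$ on $((\mathbb{Z}/p\mathbb{Z})^n)^{\mathbb{Z}}$ with metric $d(c,c')=2^{-\min\{|j|:c_j\neq c'_j\}}$ ($d(c,c)=0$); it is positively expansive if there is $\varepsilon>0$ such that for all $c\neq c'$ some $\ell\in\mathbb{N}$ gives $d(\mathcal{F}^\ell(c),\mathcal{F}^\ell(c'))\geq\varepsilon$. For nonzero $\alpha\in\mathbb{L}_p$, $\deg^+(\alpha)$ (resp. $\deg^-(\alpha)$) is the largest (resp. smallest) exponent with nonzero coefficient; $\deg^+(0)=-\infty$, $\deg^-(0)=+\infty$. A monic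 $\beta_0+\beta_1t+\dots+\beta_{n-1}t^{n-1}+t^n\in\mathbb{L}_p[t]$ is expansive if $\beta_0\neq0$, $\deg^+(\beta_0)>0$, $\deg^+(\beta_0)>\deg^+(\beta_i)$ for all $1\le i\le n-1$, $\deg^-(\beta_0)<0$ and $\deg^-(\beta_0)<\deg^-(\beta_i)$ for all $1\le i\le n-1$. A matrix $M$ is expansive if $\det(tI_n-M)$ is expansive. *)

theory Defs
  imports "HOL-Computational_Algebra.Formal_Laurent_Series"
    "HOL-Library.Extended_Real"
    "Jordan_Normal_Form.Char_Poly"
    "Berlekamp_Zassenhaus.Finite_Field"
begin

text \<open>Laurent polynomials over a ring are represented as formal Laurent series
  (type fls) with finitely many nonzero coefficients. With 'p::prime_card,
  the type 'p mod_ring is Z/pZ for the prime p = CARD('p).\<close>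

definition is_lpoly :: "'a::zero fls \<Rightarrow> bool" where
  "is_lpoly f \<longleftrightarrow> finite {k. fls_nth f k \<noteq> 0}"

definition deg_plus :: "'a::zero fls \<Rightarrow> ereal" where
  "deg_plus f = (if f = 0 then -\<infinity> else ereal (real_of_int (Max {k. fls_nth f k \<noteq> 0})))"

definition deg_minus :: "'a::zero fls \<Rightarrow> ereal" where
  "deg_minus f = (if f = 0 then \<infinity> else ereal (real_of_int (fls_subdegree f)))"

definition is_lp_tpoly :: "'a::zero fls poly \<Rightarrow> bool" where
  "is_lp_tpoly P \<longleftrightarrow> (\<forall>i. is_lpoly (Polynomial.coeff P i))"

definition expansive_poly :: "'a::comm_ring_1 fls poly \<Rightarrow> bool" where
  "expansive_poly P \<longleftrightarrow> is_lp_tpoly P \<and> lead_coeff P = 1 \<and>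
     Polynomial.coeff P 0 \<noteq> 0 \<and> deg_plus (Polynomial.coeff P 0) > 0 \<and>
     (\<forall>i\<in>{1..<degree P}. deg_plus (Polynomial.coeff P 0) > deg_plus (Polynomial.coeff P i)) \<and>
     deg_minus (Polynomial.coeff P 0) < 0 \<and>
     (\<forall>i\<in>{1..<degree P}. deg_minus (Polynomial.coeff P 0) < deg_minus (Polynomial.coeff P i))"

text \<open>char_poly M = det (t I - M) (Jordan_Normal_Form).\<close>
definition expansive_mat :: "'a::comm_ring_1 fls mat \<Rightarrow> bool" where
  "expansive_mat M \<longleftrightarrow> expansive_poly (char_poly M)"

definition companion_mat :: "'a::comm_ring_1 poly \<Rightarrow> 'a mat" where
  "companion_mat \<pi> = (let d = degree \<pi> in
     mat d d (\<lambda>(i,j). if j = d - 1 then - Polynomial.coeff \<pi> i else if i = j + 1 then 1 else 0))"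

definition lp_dvd :: "'a::comm_ring_1 fls poly \<Rightarrow> 'a fls poly \<Rightarrow> bool" where
  "lp_dvd a b \<longleftrightarrow> (\<exists>q. is_lp_tpoly q \<and> b = a * q)"

definition rational_canonical_form :: "'a::comm_ring_1 fls mat \<Rightarrow> bool" where
  "rational_canonical_form C \<longleftrightarrow> (\<exists>\<pi>s.
     (\<forall>\<pi>\<in>set \<pi>s. is_lp_tpoly \<pi> \<and> lead_coeff \<pi> = 1 \<and> degree \<pi> > 0) \<and>
     (\<forall>i j. i \<le> j \<and> j < length \<pi>s \<longrightarrow> lp_dvd (\<pi>s ! i) (\<pi>s ! j)) \<and>
     C = diag_block_mat (map companion_mat \<pi>s))"

text \<open>The linear cellular automaton with associated matrix M = sum_j A_j X^(-j):
  F(c)_i = sum_j A_j c_(i+j), where A_j is the coefficient matrix of X^(-j).\<close>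
definition lca :: "nat \<Rightarrow> 'a::comm_ring_1 fls mat \<Rightarrow> (int \<Rightarrow> 'a vec) \<Rightarrow> (int \<Rightarrow> 'a vec)" where
  "lca n M c = (\<lambda>i. vec n (\<lambda>k. \<Sum>l<n. \<Sum>j\<in>{j. fls_nth (M $$ (k,l)) (-j) \<noteq> 0}.
       fls_nth (M $$ (k,l)) (-j) * (c (i + j) $ l)))"

definition config_dist :: "(int \<Rightarrow> 'a) \<Rightarrow> (int \<Rightarrow> 'a) \<Rightarrow> real" where
  "config_dist c c' = (if c = c' then 0
     else (1/2) ^ (LEAST m. \<exists>j. nat \<bar>j\<bar> = m \<and> c j \<noteq> c' j))"

definition pos_expansive_lca :: "nat \<Rightarrow> 'a::comm_ring_1 fls mat \<Rightarrow> bool" where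
  "pos_expansive_lca n M \<longleftrightarrow> (\<exists>\<epsilon>>0. \<forall>c c'.
     (\<forall>i. c i \<in> carrier_vec n) \<longrightarrow> (\<forall>i. c' i \<in> carrier_vec n) \<longrightarrow> c \<noteq> c' \<longrightarrow>
     (\<exists>l::nat. config_dist ((lca n M ^^ l) c) ((lca n M ^^ l) c') \<ge> \<epsilon>))"

end

theory Submission
  imports Defs
begin

definition lpb :: "'a::zero fls \<Rightarrow> nat \<Rightarrow> bool" where
  "lpb f N \<longleftrightarrow> (\<forall>n. int N < \<bar>n\<bar> \<longrightarrow> fls_nth f n = 0)"

lemma lpb_mono: "lpb f N \<Longrightarrow> N \<le> M \<Longrightarrow> lpb f M"
  unfolding lpb_def by auto

lemma lpb_supp: "lpb f N \<Longrightarrow> {n. fls_nth f n \<noteq> 0} \<subseteq> {-int N..int N}"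
  unfolding lpb_def by force

lemma is_lpoly_iff: "is_lpoly f \<longleftrightarrow> (\<exists>N. lpb f N)"
proof
  assume "is_lpoly f"
  then have fin: "finite {k. fls_nth f k \<noteq> 0}" unfolding is_lpoly_def .
  obtain N :: int where N: "\<forall>k\<in>{k. fls_nth f k \<noteq> 0}. \<bar>k\<bar> \<le> N"
    using finite_nat_set_iff_bounded_le[of "nat ` abs ` {k. fls_nth f k \<noteq> 0}"] fin
    by (metis (no_types, lifting) finite_imageI imageI nat_le_iff)
  have "lpb f (nat N)" unfolding lpb_def
  proof (intro allI impI)
    fix n :: int assume "int (nat N) < \<bar>n\<bar>"
    then have "\<not> \<bar>n\<bar> \<le> N" by linarith
    then show "fls_nth f n = 0" using N by blast
  qed
  then show "\<exists>N. lpb f N" ..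
next
  assume "\<exists>N. lpb f N"
  then obtain N where "lpb f N" ..
  then show "is_lpoly f" unfolding is_lpoly_def
    by (rule finite_subset[OF lpb_supp]) simp
qed

lemma fls_mult_nth_gen:
  fixes f g :: "'a::comm_ring_1 fls"
  assumes "finite S" "{i. fls_nth f i \<noteq> 0} \<subseteq> S"
  shows "fls_nth (f * g) n = (\<Sum>i\<in>S. fls_nth f i * fls_nth g (n - i))"
proof -
  let ?df = "fls_subdegree f" and ?dg = "fls_subdegree g"
  have "fls_nth (f * g) n = (\<Sum>i=?df..n - ?dg. fls_nth f i * fls_nth g (n - i))"
    by (rule fls_times_nth(2))
  also have "\<dots> = (\<Sum>i\<in>{?df..n - ?dg} \<union> S. fls_nth f i * fls_nth g (n - i))"
  proof (rule sum.mono_neutral_left)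
    show "\<forall>i\<in>{?df..n - ?dg} \<union> S - {?df..n - ?dg}. fls_nth f i * fls_nth g (n - i) = 0"
    proof
      fix i assume i: "i \<in> {?df..n - ?dg} \<union> S - {?df..n - ?dg}"
      show "fls_nth f i * fls_nth g (n - i) = 0"
      proof (cases "fls_nth f i = 0")
        case False
        then have "?df \<le> i" by (auto intro: fls_subdegree_leI)
        with i have "n - i < ?dg" by auto
        then show ?thesis by (simp add: nth_less_subdegree_zero)
      qed simp
    qed
  qed (use assms in auto)
  also have "\<dots> = (\<Sum>i\<in>S. fls_nth f i * fls_nth g (n - i))"
    by (rule sum.mono_neutral_right) (use assms in \<open>force simp: subset_iff\<close>)+
  finally show ?thesis .
qed

lemma lpb_mult:
  fixes f g :: "'a::comm_ring_1 fls"
  assumes "lpb f N" "lpb g M" shows "lpb (f * g) (N + M)"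
  unfolding lpb_def
proof (intro allI impI)
  fix n :: int assume n: "int (N + M) < \<bar>n\<bar>"
  have "fls_nth (f * g) n = (\<Sum>i\<in>{-int N..int N}. fls_nth f i * fls_nth g (n - i))"
    by (rule fls_mult_nth_gen[OF _ lpb_supp[OF assms(1)]]) simp
  also have "\<dots> = 0"
  proof (rule sum.neutral, rule ballI)
    fix i assume "i \<in> {-int N..int N}"
    with n have "int M < \<bar>n - i\<bar>" by auto
    with assms(2) show "fls_nth f i * fls_nth g (n - i) = 0" unfolding lpb_def by auto
  qed
  finally show "fls_nth (f * g) n = 0" .
qed

lemma is_lpoly_mult: "is_lpoly (f::'a::comm_ring_1 fls) \<Longrightarrow> is_lpoly g \<Longrightarrow> is_lpoly (f * g)"
  unfolding is_lpoly_iff using lpb_mult by blast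

lemma is_lpoly_add: "is_lpoly (f::'a::comm_ring_1 fls) \<Longrightarrow> is_lpoly g \<Longrightarrow> is_lpoly (f + g)"
  unfolding is_lpoly_iff lpb_def
proof (elim exE)
  fix N M assume N: "\<forall>n. int N < \<bar>n\<bar> \<longrightarrow> fls_nth f n = 0"
    and M: "\<forall>n. int M < \<bar>n\<bar> \<longrightarrow> fls_nth g n = 0"
  have "\<forall>n. int (max N M) < \<bar>n\<bar> \<longrightarrow> fls_nth (f + g) n = 0"
    using N M by simp
  then show "\<exists>N. \<forall>n. int N < \<bar>n\<bar> \<longrightarrow> fls_nth (f + g) n = 0" ..
qed

lemma is_lpoly_uminus: "is_lpoly (f::'a::comm_ring_1 fls) \<Longrightarrow> is_lpoly (- f)"
  unfolding is_lpoly_def by simp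

lemma is_lpoly_0[simp]: "is_lpoly (0::'a::comm_ring_1 fls)"
  unfolding is_lpoly_def by simp

lemma is_lpoly_1[simp]: "is_lpoly (1::'a::comm_ring_1 fls)"
  unfolding is_lpoly_def by simp

lemma is_lpoly_sum: "(\<And>x. x \<in> A \<Longrightarrow> is_lpoly (f x)) \<Longrightarrow> is_lpoly (\<Sum>x\<in>A. f x :: 'a::comm_ring_1 fls)"
  by (induct A rule: infinite_finite_induct) (auto intro: is_lpoly_add)

lemma is_lp_tpoly_mult:
  fixes p q :: "'a::comm_ring_1 fls poly"
  assumes "is_lp_tpoly p" "is_lp_tpoly q" shows "is_lp_tpoly (p * q)"
  using assms unfolding is_lp_tpoly_def coeff_mult
  by (auto intro!: is_lpoly_sum is_lpoly_mult)

lemma is_lp_tpoly_1: "is_lp_tpoly (1::'a::comm_ring_1 fls poly)"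
  unfolding is_lp_tpoly_def by (simp add: coeff_1)

lemma is_lp_tpoly_prod_list:
  "(\<And>p. p \<in> set ps \<Longrightarrow> is_lp_tpoly p) \<Longrightarrow> is_lp_tpoly (prod_list ps :: 'a::comm_ring_1 fls poly)"
  by (induct ps) (auto intro: is_lp_tpoly_mult is_lp_tpoly_1)

definition cbound :: "'a::zero fls poly \<Rightarrow> nat \<Rightarrow> bool" where
  "cbound P N \<longleftrightarrow> (\<forall>m. lpb (Polynomial.coeff P m) N)"

lemma lp_tpoly_cbound:
  assumes "is_lp_tpoly P" shows "\<exists>N. cbound P N"
proof -
  from assms have "\<forall>m. \<exists>N. lpb (Polynomial.coeff P m) N"
    by (simp add: is_lp_tpoly_def is_lpoly_iff)
  then obtain Nf where Nf: "\<forall>m. lpb (Polynomial.coeff P m) (Nf m)" by metis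
  define N where "N = Max (Nf ` {..degree P})"
  have "lpb (Polynomial.coeff P m) N" for m
  proof (cases "m \<le> degree P")
    case True then have "Nf m \<le> N" unfolding N_def by (auto intro: Max_ge)
    then show ?thesis using Nf lpb_mono by blast
  next
    case False then have "Polynomial.coeff P m = 0" by (simp add: coeff_eq_0)
    then show ?thesis by (simp add: lpb_def)
  qed
  then show ?thesis unfolding cbound_def by blast
qed

lemma sg_facts:
  assumes "\<sigma> = 1 \<or> \<sigma> = (-1::int)"
  shows "\<sigma> * \<sigma> = 1" "\<bar>\<sigma> * n\<bar> = \<bar>n\<bar>" "\<sigma> * (\<sigma> * n) = n"
  using assms by auto

definition istop :: "int \<Rightarrow> 'a::zero fls poly \<Rightarrow> int \<Rightarrow> bool" where
  "istop \<sigma> P A \<longleftrightarrow> (\<forall>m n. A < n \<longrightarrow> fls_nth (Polynomial.coeff P m) (\<sigma> * n) = 0) \<and>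
     (\<exists>m. fls_nth (Polynomial.coeff P m) (\<sigma> * A) \<noteq> 0)"

definition topform :: "int \<Rightarrow> 'a::comm_ring_1 fls poly \<Rightarrow> int \<Rightarrow> 'a poly" where
  "topform \<sigma> P A = (\<Sum>m\<le>degree P. Polynomial.monom (fls_nth (Polynomial.coeff P m) (\<sigma> * A)) m)"

lemma coeff_topform: "Polynomial.coeff (topform \<sigma> P A) k = fls_nth (Polynomial.coeff P k) (\<sigma> * A)"
proof (cases "k \<le> degree P")
  case True
  have "Polynomial.coeff (topform \<sigma> P A) k =
      (\<Sum>m\<le>degree P. if m = k then fls_nth (Polynomial.coeff P m) (\<sigma> * A) else 0)"
    unfolding topform_def coeff_sum Polynomial.coeff_monom by simp
  also have "\<dots> = fls_nth (Polynomial.coeff P k) (\<sigma> * A)"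
    using True by (simp add: sum.delta)
  finally show ?thesis .
next
  case False
  then show ?thesis unfolding topform_def coeff_sum Polynomial.coeff_monom
    by (auto simp: coeff_eq_0 intro!: sum.neutral)
qed

lemma istop_unique: "istop \<sigma> P A \<Longrightarrow> istop \<sigma> P B \<Longrightarrow> A = B"
  unfolding istop_def by (meson linorder_neqE_linordered_idom)

lemma lpoly_top_exists:
  fixes \<beta> :: "'a::zero fls"
  assumes "is_lpoly \<beta>" "\<beta> \<noteq> 0" and sg: "\<sigma> = 1 \<or> \<sigma> = -1"
  shows "\<exists>a. fls_nth \<beta> (\<sigma> * a) \<noteq> 0 \<and> (\<forall>n>a. fls_nth \<beta> (\<sigma> * n) = 0)"
proof -
  obtain N where N: "lpb \<beta> N" using assms is_lpoly_iff by blast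
  let ?S = "{n. fls_nth \<beta> (\<sigma> * n) \<noteq> 0}"
  have sub: "?S \<subseteq> {-int N..int N}"
  proof
    fix n assume "n \<in> ?S"
    then have "\<not> int N < \<bar>\<sigma> * n\<bar>" using N unfolding lpb_def by auto
    then show "n \<in> {-int N..int N}" using sg_facts[OF sg] by auto
  qed
  then have fin: "finite ?S" by (rule finite_subset) simp
  have "\<sigma> * (\<sigma> * fls_subdegree \<beta>) \<in> {n. fls_nth \<beta> n \<noteq> 0}"
    using assms(2) by (simp add: nth_fls_subdegree_nonzero sg_facts(3)[OF sg])
  then have ne: "\<sigma> * fls_subdegree \<beta> \<in> ?S" by simp
  show ?thesis
  proof (intro exI conjI allI impI)
    show "fls_nth \<beta> (\<sigma> * Max ?S) \<noteq> 0" using Max_in[OF fin] ne by auto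
    fix n assume "Max ?S < n"
    then show "fls_nth \<beta> (\<sigma> * n) = 0" using Max_ge[OF fin, of n] by force
  qed
qed

lemma istop_exists:
  fixes P :: "'a::comm_ring_1 fls poly"
  assumes "is_lp_tpoly P" "P \<noteq> 0" and sg: "\<sigma> = 1 \<or> \<sigma> = -1"
  shows "\<exists>A. istop \<sigma> P A"
proof -
  obtain N where N: "cbound P N" using lp_tpoly_cbound assms by blast
  let ?S = "{n. \<exists>m\<le>degree P. fls_nth (Polynomial.coeff P m) (\<sigma> * n) \<noteq> 0}"
  have sub: "?S \<subseteq> {-int N..int N}"
  proof
    fix n assume "n \<in> ?S"
    then obtain m where "fls_nth (Polynomial.coeff P m) (\<sigma> * n) \<noteq> 0" by auto
    then have "\<not> int N < \<bar>\<sigma> * n\<bar>" using N unfolding cbound_def lpb_def by auto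
    then show "n \<in> {-int N..int N}" using sg_facts[OF sg] by auto
  qed
  then have fin: "finite ?S" by (rule finite_subset) simp
  have lc: "lead_coeff P \<noteq> 0" using assms by simp
  let ?b = "lead_coeff P"
  have "fls_nth ?b (\<sigma> * (\<sigma> * fls_subdegree ?b)) \<noteq> 0"
    using lc by (simp add: nth_fls_subdegree_nonzero sg_facts(3)[OF sg])
  then have ne: "\<sigma> * fls_subdegree ?b \<in> ?S" by (intro CollectI exI[of _ "degree P"]) auto
  show ?thesis unfolding istop_def
  proof (rule exI[of _ "Max ?S"], intro conjI allI impI)
    show "\<exists>m. fls_nth (Polynomial.coeff P m) (\<sigma> * Max ?S) \<noteq> 0" using Max_in[OF fin] ne by auto
    fix m n assume "Max ?S < n"
    then have "n \<notin> ?S" using Max_ge[OF fin, of n] by force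
    then show "fls_nth (Polynomial.coeff P m) (\<sigma> * n) = 0"
      by (cases "m \<le> degree P") (auto simp: coeff_eq_0)
  qed
qed

lemma mult_top_key:
  fixes f g :: "'a::comm_ring_1 fls"
  assumes sg: "\<sigma> = 1 \<or> \<sigma> = -1" and N: "lpb f N"
    and fA: "\<forall>t>A. fls_nth f (\<sigma> * t) = 0" and gB: "\<forall>t>B. fls_nth g (\<sigma> * t) = 0"
  shows "A + B < n \<Longrightarrow> fls_nth (f * g) (\<sigma> * n) = 0"
    and "fls_nth (f * g) (\<sigma> * (A + B)) = fls_nth f (\<sigma> * A) * fls_nth g (\<sigma> * B)"
proof -
  define M where "M = int N + \<bar>A\<bar>"
  let ?S = "{-M..M}"
  have "{-int N..int N} \<subseteq> ?S" unfolding M_def by auto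
  then have supp: "{i. fls_nth f i \<noteq> 0} \<subseteq> ?S" using lpb_supp[OF N] by blast
  have re: "(\<Sum>i\<in>?S. h i) = (\<Sum>t\<in>?S. h (\<sigma> * t))" for h :: "int \<Rightarrow> 'a"
  proof (rule sum.reindex_bij_witness[of _ "\<lambda>t. \<sigma> * t" "\<lambda>t. \<sigma> * t"])
  qed (use sg in auto)
  have conv: "fls_nth (f * g) (\<sigma> * k) = (\<Sum>t\<in>?S. fls_nth f (\<sigma> * t) * fls_nth g (\<sigma> * (k - t)))" for k
  proof -
    have "fls_nth (f * g) (\<sigma> * k) = (\<Sum>i\<in>?S. fls_nth f i * fls_nth g (\<sigma> * k - i))"
      by (rule fls_mult_nth_gen[OF _ supp]) simp
    also have "\<dots> = (\<Sum>t\<in>?S. fls_nth f (\<sigma> * t) * fls_nth g (\<sigma> * k - \<sigma> * t))" by (rule re)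
    also have "\<dots> = (\<Sum>t\<in>?S. fls_nth f (\<sigma> * t) * fls_nth g (\<sigma> * (k - t)))"
      by (simp add: right_diff_distrib)
    finally show ?thesis .
  qed
  show "A + B < n \<Longrightarrow> fls_nth (f * g) (\<sigma> * n) = 0"
  proof -
    assume n: "A + B < n"
    show ?thesis unfolding conv
    proof (rule sum.neutral, rule ballI)
      fix t assume "t \<in> ?S"
      show "fls_nth f (\<sigma> * t) * fls_nth g (\<sigma> * (n - t)) = 0"
      proof (cases "A < t")
        case True then show ?thesis using fA by simp
      next
        case False then have "B < n - t" using n by simp
        then show ?thesis using gB by simp
      qed
    qed
  qed
  have AS: "A \<in> ?S" unfolding M_def by auto
  have "fls_nth (f * g) (\<sigma> * (A + B)) = (\<Sum>t\<in>?S. fls_nth f (\<sigma> * t) * fls_nth g (\<sigma> * (A + B - t)))"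
    by (rule conv)
  also have "\<dots> = fls_nth f (\<sigma> * A) * fls_nth g (\<sigma> * (A + B - A))"
  proof -
    have "(\<Sum>t\<in>?S - {A}. fls_nth f (\<sigma> * t) * fls_nth g (\<sigma> * (A + B - t))) = 0"
    proof (rule sum.neutral, rule ballI)
    fix t assume "t \<in> ?S - {A}"
    then have "t \<noteq> A" by simp
    show "fls_nth f (\<sigma> * t) * fls_nth g (\<sigma> * (A + B - t)) = 0"
    proof (cases "A < t")
      case True then show ?thesis using fA by simp
    next
      case False then have "B < A + B - t" using \<open>t \<noteq> A\<close> by simp
      then show ?thesis using gB by simp
    qed
    qed
    then show ?thesis using sum.remove[OF _ AS, of "\<lambda>t. fls_nth f (\<sigma> * t) * fls_nth g (\<sigma> * (A + B - t))"] by simp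
  qed
  finally show "fls_nth (f * g) (\<sigma> * (A + B)) = fls_nth f (\<sigma> * A) * fls_nth g (\<sigma> * B)" by simp
qed

lemma topform_nonzero: "istop \<sigma> P A \<Longrightarrow> topform \<sigma> P A \<noteq> 0"
  unfolding istop_def by (metis coeff_topform coeff_0)

lemma istop_mult:
  fixes P Q :: "'a::field fls poly"
  assumes sg: "\<sigma> = 1 \<or> \<sigma> = -1" and lp: "is_lp_tpoly P"
    and tP: "istop \<sigma> P A" and tQ: "istop \<sigma> Q B"
  shows "istop \<sigma> (P * Q) (A + B) \<and> topform \<sigma> (P * Q) (A + B) = topform \<sigma> P A * topform \<sigma> Q B"
proof -
  obtain N where N: "cbound P N" using lp_tpoly_cbound lp by blast
  have fA: "\<forall>t>A. fls_nth (Polynomial.coeff P i) (\<sigma> * t) = 0" for i using tP unfolding istop_def by auto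
  have gB: "\<forall>t>B. fls_nth (Polynomial.coeff Q i) (\<sigma> * t) = 0" for i using tQ unfolding istop_def by auto
  have Ni: "lpb (Polynomial.coeff P i) N" for i using N unfolding cbound_def by auto
  have c1: "fls_nth (Polynomial.coeff (P * Q) k) (\<sigma> * n) = 0" if "A + B < n" for k n
    unfolding coeff_mult fls_nth_sum
    by (rule sum.neutral) (use mult_top_key(1)[OF sg Ni fA gB that] in auto)
  have c2: "fls_nth (Polynomial.coeff (P * Q) k) (\<sigma> * (A + B)) =
      Polynomial.coeff (topform \<sigma> P A * topform \<sigma> Q B) k" for k
    unfolding coeff_mult fls_nth_sum coeff_topform
    by (rule sum.cong) (use mult_top_key(2)[OF sg Ni fA gB] in auto)
  have nz: "topform \<sigma> P A * topform \<sigma> Q B \<noteq> 0"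
    using topform_nonzero[OF tP] topform_nonzero[OF tQ] by simp
  then obtain k where "Polynomial.coeff (topform \<sigma> P A * topform \<sigma> Q B) k \<noteq> 0"
    by (metis leading_coeff_0_iff)
  then have top: "istop \<sigma> (P * Q) (A + B)" unfolding istop_def using c1 c2 by metis
  have "topform \<sigma> (P * Q) (A + B) = topform \<sigma> P A * topform \<sigma> Q B"
    by (rule poly_eqI) (simp add: coeff_topform c2)
  with top show ?thesis by blast
qed

definition tp :: "int \<Rightarrow> 'a::zero fls poly \<Rightarrow> int" where
  "tp \<sigma> P = (SOME A. istop \<sigma> P A)"

definition TF :: "int \<Rightarrow> 'a::comm_ring_1 fls poly \<Rightarrow> 'a poly" where
  "TF \<sigma> P = topform \<sigma> P (tp \<sigma> P)"

lemma istop_tp: "is_lp_tpoly P \<Longrightarrow> P \<noteq> 0 \<Longrightarrow> \<sigma> = 1 \<or> \<sigma> = -1 \<Longrightarrow> istop \<sigma> (P :: 'a::comm_ring_1 fls poly) (tp \<sigma> P)"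
  unfolding tp_def by (rule someI_ex, rule istop_exists)

lemma TF_mult:
  fixes P Q :: "'a::field fls poly"
  assumes sg: "\<sigma> = 1 \<or> \<sigma> = -1" and lp: "is_lp_tpoly P" "is_lp_tpoly Q" and nz: "P \<noteq> 0" "Q \<noteq> 0"
  shows "TF \<sigma> (P * Q) = TF \<sigma> P * TF \<sigma> Q"
proof -
  have m: "istop \<sigma> (P * Q) (tp \<sigma> P + tp \<sigma> Q) \<and>
    topform \<sigma> (P * Q) (tp \<sigma> P + tp \<sigma> Q) = topform \<sigma> P (tp \<sigma> P) * topform \<sigma> Q (tp \<sigma> Q)"
    by (rule istop_mult[OF sg lp(1) istop_tp[OF lp(1) nz(1) sg] istop_tp[OF lp(2) nz(2) sg]])
  have "P * Q \<noteq> 0" using nz by simp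
  then have "tp \<sigma> (P * Q) = tp \<sigma> P + tp \<sigma> Q"
    using istop_unique istop_tp[OF is_lp_tpoly_mult[OF lp] _ sg] m by blast
  then show ?thesis unfolding TF_def using m by simp
qed

lemma istop_one: "\<sigma> = 1 \<or> \<sigma> = -1 \<Longrightarrow> istop \<sigma> (1 :: 'a::comm_ring_1 fls poly) 0"
  unfolding istop_def by (auto simp: coeff_1 intro: exI[of _ 0])

lemma TF_one: "\<sigma> = 1 \<or> \<sigma> = -1 \<Longrightarrow> TF \<sigma> (1 :: 'a::comm_ring_1 fls poly) = 1"
proof -
  assume sg: "\<sigma> = 1 \<or> \<sigma> = -1"
  have "tp \<sigma> (1 :: 'a fls poly) = 0"
    using istop_unique istop_one[OF sg] istop_tp[OF is_lp_tpoly_1 _ sg] by (metis one_neq_zero)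
  then show ?thesis unfolding TF_def
    by (intro poly_eqI) (simp add: coeff_topform coeff_1)
qed

lemma TF_prod_list:
  fixes ps :: "'a::field fls poly list"
  assumes sg: "\<sigma> = 1 \<or> \<sigma> = -1" and ps: "\<And>p. p \<in> set ps \<Longrightarrow> is_lp_tpoly p \<and> p \<noteq> 0"
  shows "TF \<sigma> (prod_list ps) = prod_list (map (TF \<sigma>) ps)"
  using ps
proof (induct ps)
  case Nil then show ?case using TF_one[OF sg] by simp
next
  case (Cons p ps)
  have "prod_list ps \<noteq> 0" using Cons.prems by (auto simp: prod_list_zero_iff)
  moreover have "is_lp_tpoly (prod_list ps)" using Cons.prems is_lp_tpoly_prod_list by auto
  ultimately show ?case using Cons TF_mult[OF sg, of p "prod_list ps"] by simp
qed

lemma TF_nonzero: "is_lp_tpoly P \<Longrightarrow> P \<noteq> 0 \<Longrightarrow> \<sigma> = 1 \<or> \<sigma> = -1 \<Longrightarrow> TF \<sigma> (P :: 'a::comm_ring_1 fls poly) \<noteq> 0"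
  unfolding TF_def by (rule topform_nonzero, rule istop_tp)

lemma degree_prod_list_0:
  fixes qs :: "'a::idom poly list"
  assumes "\<And>q. q \<in> set qs \<Longrightarrow> q \<noteq> 0"
  shows "degree (prod_list qs) = 0 \<longleftrightarrow> (\<forall>q\<in>set qs. degree q = 0)"
  using assms
proof (induct qs)
  case (Cons q qs)
  then have "prod_list qs \<noteq> 0" by (auto simp: prod_list_zero_iff)
  with Cons show ?case by (simp add: degree_mult_eq)
qed simp

lemma degree_TF_prod_list:
  fixes ps :: "'a::field fls poly list"
  assumes sg: "\<sigma> = 1 \<or> \<sigma> = -1" and ps: "\<And>p. p \<in> set ps \<Longrightarrow> is_lp_tpoly p \<and> p \<noteq> 0"
  shows "degree (TF \<sigma> (prod_list ps)) = 0 \<longleftrightarrow> (\<forall>p\<in>set ps. degree (TF \<sigma> p) = 0)"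
proof -
  have e: "TF \<sigma> (prod_list ps) = prod_list (map (TF \<sigma>) ps)" by (rule TF_prod_list[OF sg ps])
  have "\<forall>q\<in>set (map (TF \<sigma>) ps). q \<noteq> 0" using ps TF_nonzero[OF _ _ sg] by auto
  then show ?thesis unfolding e by (subst degree_prod_list_0) auto
qed

definition dg :: "int \<Rightarrow> 'a::zero fls \<Rightarrow> ereal" where
  "dg \<sigma> \<beta> = (if \<sigma> = 1 then deg_plus \<beta> else - deg_minus \<beta>)"

definition Esg :: "int \<Rightarrow> 'a::comm_ring_1 fls poly \<Rightarrow> bool" where
  "Esg \<sigma> P \<longleftrightarrow> Polynomial.coeff P 0 \<noteq> 0 \<and> dg \<sigma> (Polynomial.coeff P 0) > 0 \<and>
     (\<forall>i\<in>{1..<degree P}. dg \<sigma> (Polynomial.coeff P i) < dg \<sigma> (Polynomial.coeff P 0))"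

lemma dg_eq:
  fixes \<beta> :: "'a::zero fls"
  assumes lp: "is_lpoly \<beta>" and sg: "\<sigma> = 1 \<or> \<sigma> = -1"
    and a: "fls_nth \<beta> (\<sigma> * a) \<noteq> 0" and ab: "\<forall>n>a. fls_nth \<beta> (\<sigma> * n) = 0"
  shows "dg \<sigma> \<beta> = ereal (real_of_int a)"
proof -
  have nz: "\<beta> \<noteq> 0" using a by auto
  show ?thesis
  proof (cases "\<sigma> = 1")
    case True
    have fin: "finite {k. fls_nth \<beta> k \<noteq> 0}" using lp unfolding is_lpoly_def .
    have "Max {k. fls_nth \<beta> k \<noteq> 0} = a"
    proof (rule Max_eqI[OF fin])
      fix y assume "y \<in> {k. fls_nth \<beta> k \<noteq> 0}"
      then show "y \<le> a" using ab True by (metis mem_Collect_eq mult_1 not_le)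
    qed (use a True in simp)
    then show ?thesis unfolding dg_def deg_plus_def using True nz by simp
  next
    case False
    then have s: "\<sigma> = -1" using sg by simp
    have "fls_subdegree \<beta> = -a"
    proof (rule fls_subdegree_eqI)
      show "fls_nth \<beta> (-a) \<noteq> 0" using a s by simp
      fix k assume "k < -a"
      then have "a < -k" by simp
      then have "fls_nth \<beta> (\<sigma> * (-k)) = 0" using ab by blast
      then show "fls_nth \<beta> k = 0" using s by simp
    qed
    then show ?thesis unfolding dg_def deg_minus_def using s nz by simp
  qed
qed

lemma dg_zero: "\<sigma> = 1 \<or> \<sigma> = -1 \<Longrightarrow> dg \<sigma> (0::'a::zero fls) = -\<infinity>"
  unfolding dg_def deg_plus_def deg_minus_def by auto

lemma dg_less:
  fixes \<beta> :: "'a::zero fls"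
  assumes lp: "is_lpoly \<beta>" and sg: "\<sigma> = 1 \<or> \<sigma> = -1"
  shows "dg \<sigma> \<beta> < ereal (real_of_int x) \<longleftrightarrow> (\<forall>n\<ge>x. fls_nth \<beta> (\<sigma> * n) = 0)"
proof (cases "\<beta> = 0")
  case True then show ?thesis using dg_zero[OF sg, where 'a='a] by auto
next
  case False
  obtain a where a: "fls_nth \<beta> (\<sigma> * a) \<noteq> 0" and ab: "\<forall>n>a. fls_nth \<beta> (\<sigma> * n) = 0"
    using lpoly_top_exists[OF lp False sg] by blast
  have "dg \<sigma> \<beta> = ereal (real_of_int a)" by (rule dg_eq[OF lp sg a ab])
  then show ?thesis using a ab by (auto, meson not_le)
qed

lemma expansive_poly_iff:
  "expansive_poly P \<longleftrightarrow> is_lp_tpoly P \<and> lead_coeff P = 1 \<and> Esg 1 P \<and> Esg (-1) P"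
proof -
  have 1: "(- x < - y) = (y < x)" for x y :: ereal by (rule ereal_minus_less_minus)
  have 2: "(0 < - x) = (x < 0)" for x :: ereal using 1[of x 0] by simp
  show ?thesis unfolding expansive_poly_def Esg_def dg_def using 1 2 by auto
qed

lemma Esg_iff_TF:
  fixes P :: "'a::field fls poly"
  assumes lp: "is_lp_tpoly P" and mon: "lead_coeff P = 1" and d: "0 < degree P"
    and sg: "\<sigma> = 1 \<or> \<sigma> = -1"
  shows "Esg \<sigma> P \<longleftrightarrow> degree (TF \<sigma> P) = 0"
proof -
  have Pnz: "P \<noteq> 0" using mon by auto
  define A where "A = tp \<sigma> P"
  have top: "istop \<sigma> P A" unfolding A_def by (rule istop_tp[OF lp Pnz sg])
  have lpc: "is_lpoly (Polynomial.coeff P i)" for i using lp unfolding is_lp_tpoly_def by simp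
  have above: "fls_nth (Polynomial.coeff P m) (\<sigma> * n) = 0" if "A < n" for m n
    using top that unfolding istop_def by blast
  have degTF: "degree (TF \<sigma> P) = 0 \<longleftrightarrow> (\<forall>m\<in>{1..degree P}. fls_nth (Polynomial.coeff P m) (\<sigma> * A) = 0)"
  proof
    assume "degree (TF \<sigma> P) = 0"
    then show "\<forall>m\<in>{1..degree P}. fls_nth (Polynomial.coeff P m) (\<sigma> * A) = 0"
    proof (intro ballI)
      fix m assume "degree (TF \<sigma> P) = 0" "m \<in> {1..degree P}"
      then have "degree (TF \<sigma> P) < m" by simp
      then have "Polynomial.coeff (TF \<sigma> P) m = 0" by (rule coeff_eq_0)
      then show "fls_nth (Polynomial.coeff P m) (\<sigma> * A) = 0" unfolding TF_def A_def[symmetric] coeff_topform .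
    qed
  next
    assume h: "\<forall>m\<in>{1..degree P}. fls_nth (Polynomial.coeff P m) (\<sigma> * A) = 0"
    have "Polynomial.coeff (TF \<sigma> P) i = 0" if "0 < i" for i
    proof (cases "i \<le> degree P")
      case True then show ?thesis using h that unfolding TF_def A_def[symmetric] coeff_topform by auto
    next
      case False then show ?thesis unfolding TF_def A_def[symmetric] coeff_topform by (simp add: coeff_eq_0)
    qed
    then show "degree (TF \<sigma> P) = 0" using degree_le[of 0 "TF \<sigma> P"] by simp
  qed
  have dg1: "dg \<sigma> (1::'a fls) = ereal 0" using dg_eq[of "1::'a fls" \<sigma> 0] sg by auto
  show ?thesis unfolding degTF
  proof
    assume E: "Esg \<sigma> P"
    then have c0: "Polynomial.coeff P 0 \<noteq> 0" unfolding Esg_def by blast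
    obtain a0 where a0: "fls_nth (Polynomial.coeff P 0) (\<sigma> * a0) \<noteq> 0"
      and a0b: "\<forall>n>a0. fls_nth (Polynomial.coeff P 0) (\<sigma> * n) = 0"
      using lpoly_top_exists[OF lpc c0 sg] by blast
    have dga0: "dg \<sigma> (Polynomial.coeff P 0) = ereal (real_of_int a0)" by (rule dg_eq[OF lpc sg a0 a0b])
    have less: "dg \<sigma> (Polynomial.coeff P i) < ereal (real_of_int a0)" if "i \<in> {1..degree P}" for i
    proof (cases "i = degree P")
      case True
      then have "dg \<sigma> (Polynomial.coeff P i) = ereal 0" using mon dg1 by simp
      also have "\<dots> < ereal (real_of_int a0)" using E dga0 unfolding Esg_def by (simp add: zero_ereal_def)
      finally show ?thesis .
    next
      case False
      then show ?thesis using E that dga0 unfolding Esg_def by auto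
    qed
    have z: "\<forall>n\<ge>a0. fls_nth (Polynomial.coeff P i) (\<sigma> * n) = 0" if "i \<in> {1..degree P}" for i
      using less[OF that] dg_less[OF lpc sg] by blast
    have "A = a0"
    proof (rule ccontr)
      assume ne: "A \<noteq> a0"
      have "a0 \<le> A" using a0 above by (meson not_le)
      with ne have Aa: "a0 < A" by simp
      obtain m where m: "fls_nth (Polynomial.coeff P m) (\<sigma> * A) \<noteq> 0" using top unfolding istop_def by blast
      show False
      proof (cases "m = 0")
        case True then show False using m a0b Aa by simp
      next
        case False
        show False
        proof (cases "m \<le> degree P")
          case True then show False using z[of m] m Aa False by auto
        next
          case False2: False then show False using m by (simp add: coeff_eq_0)
        qed
      qed
    qed
    then show "\<forall>m\<in>{1..degree P}. fls_nth (Polynomial.coeff P m) (\<sigma> * A) = 0" using z by auto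
  next
    assume h: "\<forall>m\<in>{1..degree P}. fls_nth (Polynomial.coeff P m) (\<sigma> * A) = 0"
    obtain m where m: "fls_nth (Polynomial.coeff P m) (\<sigma> * A) \<noteq> 0" using top unfolding istop_def by blast
    have "m = 0"
    proof (rule ccontr)
      assume "m \<noteq> 0"
      then show False using h m by (cases "m \<le> degree P") (auto simp: coeff_eq_0)
    qed
    with m have a: "fls_nth (Polynomial.coeff P 0) (\<sigma> * A) \<noteq> 0" by simp
    then have c0: "Polynomial.coeff P 0 \<noteq> 0" by auto
    have dgA: "dg \<sigma> (Polynomial.coeff P 0) = ereal (real_of_int A)"
      by (rule dg_eq[OF lpc sg a]) (use above in blast)
    have less: "dg \<sigma> (Polynomial.coeff P i) < ereal (real_of_int A)" if "i \<in> {1..degree P}" for i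
      unfolding dg_less[OF lpc sg]
    proof (intro allI impI)
      fix n assume "A \<le> n"
      then show "fls_nth (Polynomial.coeff P i) (\<sigma> * n) = 0"
        using h that above by (cases "n = A") auto
    qed
    have "dg \<sigma> (Polynomial.coeff P (degree P)) < ereal (real_of_int A)" using less d by auto
    then have "0 < ereal (real_of_int A)" using mon dg1 by (simp add: zero_ereal_def)
    then show "Esg \<sigma> P" unfolding Esg_def using c0 dgA less by auto
  qed
qed

lemma dim_companion[simp]:
  "dim_row (companion_mat \<pi>) = degree \<pi>" "dim_col (companion_mat \<pi>) = degree \<pi>"
  unfolding companion_mat_def Let_def by auto

lemma companion_carrier: "companion_mat \<pi> \<in> carrier_mat (degree \<pi>) (degree \<pi>)"
  unfolding carrier_mat_def by simp

lemma companion_index: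
  "i < degree \<pi> \<Longrightarrow> j < degree \<pi> \<Longrightarrow> companion_mat \<pi> $$ (i,j) =
    (if j = degree \<pi> - 1 then - Polynomial.coeff \<pi> i else if i = j + 1 then 1 else 0)"
  unfolding companion_mat_def Let_def by simp

lemma cpm_companion_entry:
  fixes \<pi> :: "'a::comm_ring_1 poly"
  assumes "i < degree \<pi>" "j < degree \<pi>"
  shows "char_poly_matrix (companion_mat \<pi>) $$ (i,j) = (if i = j then [:0,1:] else 0) +
    [: if j = degree \<pi> - 1 then Polynomial.coeff \<pi> i else if i = j + 1 then -1 else 0 :]"
  using assms unfolding char_poly_matrix_def by (simp add: companion_index)

lemma pCons_as_sum: "pCons (c::'a::comm_ring_1) p = [:0,1:] * p + [:c:]"
  by (simp add: poly_eq_iff coeff_pCons split: nat.split)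

lemma char_poly_companion_aux:
  "\<forall>\<pi>::'a::comm_ring_1 poly. degree \<pi> = Suc k \<longrightarrow> lead_coeff \<pi> = 1 \<longrightarrow> char_poly (companion_mat \<pi>) = \<pi>"
proof (induct k)
  case 0
  show ?case
  proof (intro allI impI)
    fix \<pi> :: "'a poly" assume d: "degree \<pi> = Suc 0" and m: "lead_coeff \<pi> = 1"
    let ?M = "char_poly_matrix (companion_mat \<pi>)"
    have M: "?M \<in> carrier_mat 1 1" using d char_poly_matrix_closed[OF companion_carrier[of \<pi>]] by simp
    have "char_poly (companion_mat \<pi>) = (\<Sum>j<1. ?M $$ (0,j) * cofactor ?M 0 j)"
      unfolding char_poly_def by (rule laplace_expansion_row[OF M]) simp
    also have "\<dots> = ?M $$ (0,0)"
    proof -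
      have "mat_delete ?M 0 0 \<in> carrier_mat 0 0" using mat_delete_carrier[OF M] by simp
      then show ?thesis by (simp add: cofactor_def)
    qed
    also have "\<dots> = [:0,1:] + [:Polynomial.coeff \<pi> 0:]"
      using d by (simp add: cpm_companion_entry)
    also have "\<dots> = \<pi>"
    proof (rule poly_eqI)
      fix n show "Polynomial.coeff ([:0,1:] + [:Polynomial.coeff \<pi> 0:]) n = Polynomial.coeff \<pi> n"
        using d m by (cases n) (auto simp: coeff_eq_0 numeral_2_eq_2 coeff_pCons split: nat.split)
    qed
    finally show "char_poly (companion_mat \<pi>) = \<pi>" .
  qed
next
  case (Suc k)
  show ?case
  proof (intro allI impI)
    fix \<pi> :: "'a poly" assume d: "degree \<pi> = Suc (Suc k)" and m: "lead_coeff \<pi> = 1"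
    obtain c0 \<pi>' where pi: "\<pi> = pCons c0 \<pi>'" by (cases \<pi>) auto
    have nz: "\<pi>' \<noteq> 0" using d pi by auto
    have d': "degree \<pi>' = Suc k" using d pi nz by simp
    have m': "lead_coeff \<pi>' = 1" using m pi d d' by simp
    have IH: "char_poly (companion_mat \<pi>') = \<pi>'" using Suc d' m' by blast
    have cS: "Polynomial.coeff \<pi> (Suc i) = Polynomial.coeff \<pi>' i" for i unfolding pi by simp
    define n where "n = Suc (Suc k)"
    let ?M = "char_poly_matrix (companion_mat \<pi>)"
    have M: "?M \<in> carrier_mat n n" using d char_poly_matrix_closed[OF companion_carrier[of \<pi>]] by (simp add: n_def)
    have ent: "?M $$ (i,j) = (if i = j then [:0,1:] else 0) +
      [: if j = n - 1 then Polynomial.coeff \<pi> i else if i = j + 1 then -1 else 0 :]"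
      if "i < n" "j < n" for i j using cpm_companion_entry[of i \<pi> j] that d n_def by simp
    have del0: "mat_delete ?M 0 0 = char_poly_matrix (companion_mat \<pi>')"
    proof (rule eq_matI)
      show "dim_row (mat_delete ?M 0 0) = dim_row (char_poly_matrix (companion_mat \<pi>'))"
        using d d' by (simp add: char_poly_matrix_def)
      show "dim_col (mat_delete ?M 0 0) = dim_col (char_poly_matrix (companion_mat \<pi>'))"
        using d d' by (simp add: char_poly_matrix_def)
      fix i j assume "i < dim_row (char_poly_matrix (companion_mat \<pi>'))"
        "j < dim_col (char_poly_matrix (companion_mat \<pi>'))"
      then have ij: "i < Suc k" "j < Suc k" using d' by (auto simp: char_poly_matrix_def)
      have "mat_delete ?M 0 0 $$ (i,j) = ?M $$ (Suc i, Suc j)"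
        using ij M d unfolding mat_delete_def by (simp add: char_poly_matrix_def)
      also have "\<dots> = char_poly_matrix (companion_mat \<pi>') $$ (i,j)"
        using ij by (simp add: ent n_def cpm_companion_entry d' cS)
      finally show "mat_delete ?M 0 0 $$ (i,j) = char_poly_matrix (companion_mat \<pi>') $$ (i,j)" .
    qed
    let ?D = "mat_delete ?M 0 (n - 1)"
    have D: "?D \<in> carrier_mat (n - 1) (n - 1)" using mat_delete_carrier[OF M] .
    have Dent: "?D $$ (i,j) = (if j = Suc i then [:0,1:] else 0) + (if i = j then [:-1:] else 0)"
      if "i < n - 1" "j < n - 1" for i j
    proof -
      have "?D $$ (i,j) = ?M $$ (Suc i, j)"
        using that M unfolding mat_delete_def by simp
      also have "\<dots> = (if j = Suc i then [:0,1:] else 0) + (if i = j then [:-1:] else 0)"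
        using that by (simp add: ent)
      finally show ?thesis .
    qed
    have ut: "upper_triangular ?D"
      unfolding upper_triangular_def using D Dent by auto
    have "det ?D = prod_list (diag_mat ?D)" by (rule det_upper_triangular[OF ut D])
    also have "\<dots> = (\<Prod>i = 0..<n - 1. ?D $$ (i,i))" using M by (simp add: prod_list_diag_prod)
    also have "\<dots> = (\<Prod>i = 0..<n - 1. [:-1:])"
    proof (rule prod.cong[OF refl])
      fix i assume "i \<in> {0..<n - 1}"
      then show "?D $$ (i,i) = [:-1:]" using Dent[of i i] by simp
    qed
    also have "\<dots> = (-1) ^ (n - 1)"
    proof -
      have "[:-1:] = (-1 :: 'a poly)" by (simp add: one_pCons)
      then show ?thesis by simp
    qed
    finally have detD: "det ?D = (-1) ^ (n - 1)" .
    have cof1: "cofactor ?M 0 (n - 1) = 1"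
      unfolding cofactor_def detD by (simp add: power_mult_distrib[symmetric])
    have "char_poly (companion_mat \<pi>) = (\<Sum>j<n. ?M $$ (0,j) * cofactor ?M 0 j)"
      unfolding char_poly_def by (rule laplace_expansion_row[OF M]) (simp add: n_def)
    also have "\<dots> = (\<Sum>j\<in>{0, n - 1}. ?M $$ (0,j) * cofactor ?M 0 j)"
    proof (rule sum.mono_neutral_right)
      show "\<forall>j\<in>{..<n} - {0, n - 1}. ?M $$ (0,j) * cofactor ?M 0 j = 0"
        by (auto simp: ent)
    qed (auto simp: n_def)
    also have "\<dots> = [:0,1:] * \<pi>' + [:c0:]"
    proof -
      have c0f: "Polynomial.coeff \<pi> 0 = c0" unfolding pi by simp
      have e00: "?M $$ (0,0) = [:0,1:]" using ent[of 0 0] by (simp add: n_def)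
      have e0l: "?M $$ (0, n - 1) = [:c0:]" using ent[of 0 "n - 1"] c0f by (simp add: n_def)
      have cof0: "cofactor ?M 0 0 = \<pi>'" using IH unfolding cofactor_def del0 char_poly_def by simp
      have "0 \<noteq> n - 1" by (simp add: n_def)
      then show ?thesis using e00 e0l cof0 cof1 by simp
    qed
    also have "\<dots> = \<pi>" unfolding pi by (rule pCons_as_sum[symmetric])
    finally show "char_poly (companion_mat \<pi>) = \<pi>" .
  qed
qed

lemma char_poly_companion:
  fixes \<pi> :: "'a::comm_ring_1 poly"
  assumes "0 < degree \<pi>" "lead_coeff \<pi> = 1"
  shows "char_poly (companion_mat \<pi>) = \<pi>"
proof -
  have "degree \<pi> = Suc (degree \<pi> - 1)" using assms by simp
  then show ?thesis using char_poly_companion_aux[of "degree \<pi> - 1"] assms by blast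
qed

lemma char_poly_four_block_zero:
  fixes A :: "'a::idom mat"
  assumes A: "A \<in> carrier_mat n n" and B: "B \<in> carrier_mat m m"
  shows "char_poly (four_block_mat A (0\<^sub>m n m) (0\<^sub>m m n) B) = char_poly A * char_poly B"
proof -
  have "char_poly_matrix (four_block_mat A (0\<^sub>m n m) (0\<^sub>m m n) B) =
     four_block_mat (char_poly_matrix A) (0\<^sub>m n m) (0\<^sub>m m n) (char_poly_matrix B)"
    by (rule eq_matI) (use A B in \<open>auto simp: char_poly_matrix_def\<close>)
  then show ?thesis unfolding char_poly_def
    by (simp add: det_four_block_mat_lower_left_zero[OF char_poly_matrix_closed[OF A] _ refl char_poly_matrix_closed[OF B]])
qed

lemma char_poly_diag_block_mat:
  fixes As :: "'a::idom mat list"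
  assumes "\<And>A. A \<in> set As \<Longrightarrow> dim_row A = dim_col A"
  shows "char_poly (diag_block_mat As) = prod_list (map char_poly As)"
  using assms
proof (induct As)
  case Nil
  show ?case unfolding char_poly_def char_poly_matrix_def by simp
next
  case (Cons A As)
  let ?B = "diag_block_mat As"
  have dA: "dim_col A = dim_row A" using Cons.prems by simp
  have A: "A \<in> carrier_mat (dim_row A) (dim_row A)" using dA unfolding carrier_mat_def by simp
  have mm: "map dim_row As = map dim_col As" using Cons.prems by (intro map_cong) auto
  have dB: "dim_col ?B = dim_row ?B" by (simp only: dim_diag_block_mat mm)
  then have B: "?B \<in> carrier_mat (dim_row ?B) (dim_row ?B)" unfolding carrier_mat_def by simp
  have e: "diag_block_mat (A # As) =
     four_block_mat A (0\<^sub>m (dim_row A) (dim_row ?B)) (0\<^sub>m (dim_row ?B) (dim_row A)) ?B"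
    unfolding diag_block_mat.simps Let_def dA dB ..
  have "char_poly (diag_block_mat (A # As)) = char_poly A * char_poly ?B"
    unfolding e by (rule char_poly_four_block_zero[OF A B])
  moreover have "char_poly ?B = prod_list (map char_poly As)" using Cons by simp
  ultimately show ?case by simp
qed

definition zc :: "nat \<Rightarrow> int \<Rightarrow> 'a::zero vec" where "zc n = (\<lambda>i. 0\<^sub>v n)"

definition NEW :: "nat \<Rightarrow> 'a::comm_ring_1 fls mat \<Rightarrow> nat \<Rightarrow> (int \<Rightarrow> 'a vec) \<Rightarrow> bool" where
  "NEW n M r e \<longleftrightarrow> (\<forall>i. e i \<in> carrier_vec n) \<and> e \<noteq> zc n \<and>
     (\<forall>l j. \<bar>j\<bar> \<le> int r \<longrightarrow> (lca n M ^^ l) e j = 0\<^sub>v n)"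

lemma dim_lca[simp]: "dim_vec (lca n M c i) = n"
  unfolding lca_def by simp

lemma lca_carrier[simp]: "lca n M c i \<in> carrier_vec n"
  unfolding lca_def by simp

lemma lca_pow_carrier: "(\<forall>i. c i \<in> carrier_vec n) \<Longrightarrow> (lca n M ^^ l) c i \<in> carrier_vec n"
  by (cases l) auto

lemma lca_index: "k < n \<Longrightarrow> lca n M c i $ k = (\<Sum>l<n. \<Sum>j\<in>{j. fls_nth (M $$ (k,l)) (-j) \<noteq> 0}.
       fls_nth (M $$ (k,l)) (-j) * (c (i + j) $ l))"
  unfolding lca_def by simp

lemma lca_diff:
  assumes "\<forall>i. c i \<in> carrier_vec n" "\<forall>i. c' i \<in> carrier_vec n"
  shows "lca n M (\<lambda>i. c i - c' i) = (\<lambda>i. lca n M c i - lca n M c' i)"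
proof
  fix i
  show "lca n M (\<lambda>i. c i - c' i) i = lca n M c i - lca n M c' i"
  proof (rule eq_vecI)
    fix k assume "k < dim_vec (lca n M c i - lca n M c' i)"
    then have k: "k < n" by simp
    show "lca n M (\<lambda>i. c i - c' i) i $ k = (lca n M c i - lca n M c' i) $ k"
      proof -
      have ix: "(c (i+j) - c' (i+j)) $ l = c (i+j) $ l - c' (i+j) $ l" if "l < n" for l j
        using assms(2) that by (metis carrier_vecD index_minus_vec(1))
      have "lca n M (\<lambda>i. c i - c' i) i $ k = (\<Sum>l<n. \<Sum>j\<in>{j. fls_nth (M $$ (k,l)) (-j) \<noteq> 0}.
       fls_nth (M $$ (k,l)) (-j) * (c (i + j) $ l) - fls_nth (M $$ (k,l)) (-j) * (c' (i + j) $ l))"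
        unfolding lca_index[OF k]
        by (intro sum.cong refl) (simp add: ix right_diff_distrib)
      then show ?thesis using k
        by (simp add: lca_index sum_subtractf)
    qed
  qed simp
qed

lemma lca_pow_diff:
  assumes "\<forall>i. c i \<in> carrier_vec n" "\<forall>i. c' i \<in> carrier_vec n"
  shows "(lca n M ^^ l) (\<lambda>i. c i - c' i) = (\<lambda>i. (lca n M ^^ l) c i - (lca n M ^^ l) c' i)"
proof (induct l)
  case (Suc l)
  have "(lca n M ^^ Suc l) (\<lambda>i. c i - c' i) = lca n M (\<lambda>i. (lca n M ^^ l) c i - (lca n M ^^ l) c' i)"
    using Suc by simp
  also have "\<dots> = (\<lambda>i. (lca n M ^^ Suc l) c i - (lca n M ^^ Suc l) c' i)"
    by (simp add: lca_diff lca_pow_carrier assms)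
  finally show ?case .
qed simp

lemma lca_zc: "lca n M (zc n) = zc n"
proof
  fix i show "lca n M (zc n) i = zc n i"
    by (rule eq_vecI) (auto simp: lca_index zc_def)
qed

lemma lca_pow_zc: "(lca n M ^^ l) (zc n) = zc n"
  by (induct l) (auto simp: lca_zc)

lemma config_dist_ge:
  assumes "c \<noteq> c'"
  shows "config_dist c c' \<ge> (1/2) ^ r \<longleftrightarrow> (\<exists>j. \<bar>j\<bar> \<le> int r \<and> c j \<noteq> c' j)"
proof -
  define m where "m = (LEAST m. \<exists>j. nat \<bar>j\<bar> = m \<and> c j \<noteq> c' j)"
  obtain j0 where j0: "c j0 \<noteq> c' j0" using assms by auto
  have ex: "\<exists>j. nat \<bar>j\<bar> = m \<and> c j \<noteq> c' j"
    unfolding m_def by (rule LeastI[of _ "nat \<bar>j0\<bar>"]) (use j0 in auto)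
  have least: "m \<le> nat \<bar>j\<bar>" if "c j \<noteq> c' j" for j
    unfolding m_def by (rule Least_le) (use that in auto)
  have d: "config_dist c c' = (1/2) ^ m" unfolding config_dist_def m_def using assms by simp
  have "(1/2::real) ^ r \<le> (1/2) ^ m \<longleftrightarrow> m \<le> r" by (simp add: power_decreasing_iff)
  then show ?thesis unfolding d
  proof (intro iffI)
    assume "(1/2::real) ^ r \<le> (1/2) ^ m"
    then have "m \<le> r" using \<open>(1/2::real) ^ r \<le> (1/2) ^ m \<longleftrightarrow> m \<le> r\<close> by blast
    then show "\<exists>j. \<bar>j\<bar> \<le> int r \<and> c j \<noteq> c' j" using ex by force
  next
    assume "\<exists>j. \<bar>j\<bar> \<le> int r \<and> c j \<noteq> c' j"
    then obtain j where "\<bar>j\<bar> \<le> int r" "c j \<noteq> c' j" by blast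
    then have "m \<le> r" using least[of j] by linarith
    then show "(1/2::real) ^ r \<le> (1/2) ^ m" using \<open>(1/2::real) ^ r \<le> (1/2) ^ m \<longleftrightarrow> m \<le> r\<close> by blast
  qed
qed

lemma pos_exp_iff: "pos_expansive_lca n M \<longleftrightarrow> (\<exists>r. \<not> (\<exists>e. NEW n M r e))"
proof
  assume "pos_expansive_lca n M"
  then obtain \<epsilon> :: real where eps: "\<epsilon> > 0" and H: "\<forall>c c'. (\<forall>i. c i \<in> carrier_vec n) \<longrightarrow> (\<forall>i. c' i \<in> carrier_vec n) \<longrightarrow> c \<noteq> c' \<longrightarrow>
     (\<exists>l::nat. config_dist ((lca n M ^^ l) c) ((lca n M ^^ l) c') \<ge> \<epsilon>)"
    unfolding pos_expansive_lca_def by blast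
  obtain r where r: "(1/2::real) ^ r < \<epsilon>" using real_arch_pow_inv[OF eps, of "1/2"] by auto
  show "\<exists>r. \<not> (\<exists>e. NEW n M r e)"
  proof (intro exI notI)
    assume "\<exists>e. NEW n M r e"
    then obtain e where e: "\<forall>i. e i \<in> carrier_vec n" "e \<noteq> zc n"
      and w: "\<forall>l j. \<bar>j\<bar> \<le> int r \<longrightarrow> (lca n M ^^ l) e j = 0\<^sub>v n" unfolding NEW_def by blast
    have zcc: "\<forall>i. zc n i \<in> carrier_vec n" unfolding zc_def by simp
    obtain l where l: "config_dist ((lca n M ^^ l) e) ((lca n M ^^ l) (zc n)) \<ge> \<epsilon>"
      using H e zcc by blast
    then have l': "config_dist ((lca n M ^^ l) e) (zc n) \<ge> \<epsilon>" by (simp add: lca_pow_zc)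
    then have ne: "(lca n M ^^ l) e \<noteq> zc n" using eps unfolding config_dist_def by auto
    have "config_dist ((lca n M ^^ l) e) (zc n) \<ge> (1/2) ^ r" using l' r by simp
    then obtain j where "\<bar>j\<bar> \<le> int r" "(lca n M ^^ l) e j \<noteq> zc n j"
      using config_dist_ge[OF ne] by blast
    then show False using w unfolding zc_def by simp
  qed
next
  assume "\<exists>r. \<not> (\<exists>e. NEW n M r e)"
  then obtain r where r: "\<not> (\<exists>e. NEW n M r e)" by blast
  show "pos_expansive_lca n M" unfolding pos_expansive_lca_def
  proof (intro exI[of _ "(1/2::real)^r"] conjI allI impI)
    show "(0::real) < (1/2)^r" by simp
    fix c c' :: "int \<Rightarrow> 'a vec"
    assume c: "\<forall>i. c i \<in> carrier_vec n" and c': "\<forall>i. c' i \<in> carrier_vec n" and ne: "c \<noteq> c'"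
    define e where "e = (\<lambda>i. c i - c' i)"
    have ec: "\<forall>i. e i \<in> carrier_vec n" unfolding e_def using c c' by simp
    have enz: "e \<noteq> zc n"
    proof
      assume "e = zc n"
      then have "c i = c' i" for i
      proof -
        assume z: "e = zc n"
        have "c i - c' i = 0\<^sub>v n" using fun_cong[OF z, of i] unfolding e_def zc_def .
        then show "c i = c' i" using c c'
          by (metis carrier_vecD index_minus_vec(1) index_zero_vec(1) eq_vecI right_minus_eq index_minus_vec(2))
      qed
      then show False using ne by blast
    qed
    have "\<not> NEW n M r e" using r by blast
    then obtain l j where j: "\<bar>j\<bar> \<le> int r" and nz: "(lca n M ^^ l) e j \<noteq> 0\<^sub>v n"
      unfolding NEW_def using ec enz by blast
    have "(lca n M ^^ l) e j = (lca n M ^^ l) c j - (lca n M ^^ l) c' j"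
      unfolding e_def lca_pow_diff[OF c c'] ..
    then have neq: "(lca n M ^^ l) c j \<noteq> (lca n M ^^ l) c' j" using nz
      using minus_cancel_vec[OF lca_pow_carrier[OF c']] by metis
    then have "(lca n M ^^ l) c \<noteq> (lca n M ^^ l) c'" by metis
    then have "config_dist ((lca n M ^^ l) c) ((lca n M ^^ l) c') \<ge> (1/2)^r"
      using config_dist_ge j neq by blast
    then show "\<exists>l. (1/2)^r \<le> config_dist ((lca n M ^^ l) c) ((lca n M ^^ l) c')" by blast
  qed
qed

lemma sum_split_ab: "(\<Sum>l<(a::nat)+b. f l) = (\<Sum>l<a. f l) + (\<Sum>l<b. f (a+l))"
  by (induct b) (auto simp: ac_simps)

definition join :: "(int \<Rightarrow> 'a vec) \<Rightarrow> (int \<Rightarrow> 'a vec) \<Rightarrow> int \<Rightarrow> 'a vec" where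
  "join c1 c2 = (\<lambda>i. c1 i @\<^sub>v c2 i)"

lemma lca_join:
  fixes A B :: "'a::comm_ring_1 fls mat"
  assumes A: "A \<in> carrier_mat a a" and B: "B \<in> carrier_mat b b"
    and c1: "\<forall>i. c1 i \<in> carrier_vec a" and c2: "\<forall>i. c2 i \<in> carrier_vec b"
  shows "lca (a+b) (four_block_mat A (0\<^sub>m a b) (0\<^sub>m b a) B) (join c1 c2) = join (lca a A c1) (lca b B c2)"
proof
  fix i
  let ?M = "four_block_mat A (0\<^sub>m a b) (0\<^sub>m b a) B"
  have dA: "dim_row A = a" "dim_col A = a" using A by auto
  have dB: "dim_row B = b" "dim_col B = b" using B by auto
  have d1[simp]: "dim_vec (c1 x) = a" for x using c1 carrier_vecD by blast
  have d2[simp]: "dim_vec (c2 x) = b" for x using c2 carrier_vecD by blast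
  have jv: "(c1 x @\<^sub>v c2 x) $ l = (if l < a then c1 x $ l else c2 x $ (l - a))" if "l < a + b" for x l
    using that by simp
  show "lca (a+b) ?M (join c1 c2) i = join (lca a A c1) (lca b B c2) i"
  proof (rule eq_vecI)
    show "dim_vec (lca (a + b) ?M (join c1 c2) i) = dim_vec (join (lca a A c1) (lca b B c2) i)"
      unfolding join_def by simp
    fix k assume "k < dim_vec (join (lca a A c1) (lca b B c2) i)"
    then have k: "k < a + b" unfolding join_def by simp
    have Mkl: "?M $$ (k,l) = (if k < a then (if l < a then A $$ (k,l) else 0)
        else (if l < a then 0 else B $$ (k - a, l - a)))" if "l < a + b" for l
      using k that dA dB by simp
    have "lca (a+b) ?M (join c1 c2) i $ k =
      (\<Sum>l<a+b. \<Sum>j\<in>{j. fls_nth (?M $$ (k,l)) (-j) \<noteq> 0}. fls_nth (?M $$ (k,l)) (-j) * ((c1 (i+j) @\<^sub>v c2 (i+j)) $ l))"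
      using k by (simp add: lca_index join_def)
    also have "\<dots> = (\<Sum>l<a. \<Sum>j\<in>{j. fls_nth (?M $$ (k,l)) (-j) \<noteq> 0}. fls_nth (?M $$ (k,l)) (-j) * ((c1 (i+j) @\<^sub>v c2 (i+j)) $ l))
       + (\<Sum>l<b. \<Sum>j\<in>{j. fls_nth (?M $$ (k,a+l)) (-j) \<noteq> 0}. fls_nth (?M $$ (k,a+l)) (-j) * ((c1 (i+j) @\<^sub>v c2 (i+j)) $ (a+l)))"
      by (rule sum_split_ab)
    also have "\<dots> = join (lca a A c1) (lca b B c2) i $ k"
    proof (cases "k < a")
      case True
      have "(\<Sum>l<a. \<Sum>j\<in>{j. fls_nth (?M $$ (k,l)) (-j) \<noteq> 0}. fls_nth (?M $$ (k,l)) (-j) * ((c1 (i+j) @\<^sub>v c2 (i+j)) $ l))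
        = lca a A c1 i $ k"
        unfolding lca_index[OF True]
      proof (rule sum.cong[OF refl])
        fix l assume "l \<in> {..<a}"
        then have l: "l < a" by simp
        have e1: "?M $$ (k,l) = A $$ (k,l)" using Mkl[of l] l True by simp
        have e2: "(c1 (i+j) @\<^sub>v c2 (i+j)) $ l = c1 (i+j) $ l" for j using jv[of l] l by simp
        show "(\<Sum>j\<in>{j. fls_nth (?M $$ (k,l)) (-j) \<noteq> 0}. fls_nth (?M $$ (k,l)) (-j) * ((c1 (i+j) @\<^sub>v c2 (i+j)) $ l))
          = (\<Sum>j\<in>{j. fls_nth (A $$ (k,l)) (-j) \<noteq> 0}. fls_nth (A $$ (k,l)) (-j) * (c1 (i+j) $ l))"
          by (simp only: e1 e2)
      qed
      moreover have "(\<Sum>l<b. \<Sum>j\<in>{j. fls_nth (?M $$ (k,a+l)) (-j) \<noteq> 0}. fls_nth (?M $$ (k,a+l)) (-j) * ((c1 (i+j) @\<^sub>v c2 (i+j)) $ (a+l))) = 0"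
      proof (rule sum.neutral, rule ballI)
        fix l assume "l \<in> {..<b}"
        then have e: "?M $$ (k,a+l) = 0" using Mkl[of "a+l"] True by simp
        show "(\<Sum>j\<in>{j. fls_nth (?M $$ (k,a+l)) (-j) \<noteq> 0}. fls_nth (?M $$ (k,a+l)) (-j) * ((c1 (i+j) @\<^sub>v c2 (i+j)) $ (a+l))) = 0"
          by (simp only: e) simp
      qed
      moreover have "join (lca a A c1) (lca b B c2) i $ k = lca a A c1 i $ k"
        unfolding join_def using True by simp
      ultimately show ?thesis by simp
    next
      case False
      have kb: "k - a < b" using k False by simp
      have "(\<Sum>l<a. \<Sum>j\<in>{j. fls_nth (?M $$ (k,l)) (-j) \<noteq> 0}. fls_nth (?M $$ (k,l)) (-j) * ((c1 (i+j) @\<^sub>v c2 (i+j)) $ l)) = 0"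
      proof (rule sum.neutral, rule ballI)
        fix l assume "l \<in> {..<a}"
        then have e: "?M $$ (k,l) = 0" using Mkl[of l] False by simp
        show "(\<Sum>j\<in>{j. fls_nth (?M $$ (k,l)) (-j) \<noteq> 0}. fls_nth (?M $$ (k,l)) (-j) * ((c1 (i+j) @\<^sub>v c2 (i+j)) $ l)) = 0"
          by (simp only: e) simp
      qed
      moreover have "(\<Sum>l<b. \<Sum>j\<in>{j. fls_nth (?M $$ (k,a+l)) (-j) \<noteq> 0}. fls_nth (?M $$ (k,a+l)) (-j) * ((c1 (i+j) @\<^sub>v c2 (i+j)) $ (a+l)))
          = lca b B c2 i $ (k - a)"
        unfolding lca_index[OF kb]
      proof (rule sum.cong[OF refl])
        fix l assume "l \<in> {..<b}"
        then have l: "l < b" by simp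
        have e1: "?M $$ (k,a+l) = B $$ (k-a,l)" using Mkl[of "a+l"] l False by simp
        have e2: "(c1 (i+j) @\<^sub>v c2 (i+j)) $ (a+l) = c2 (i+j) $ l" for j using jv[of "a+l"] l by simp
        show "(\<Sum>j\<in>{j. fls_nth (?M $$ (k,a+l)) (-j) \<noteq> 0}. fls_nth (?M $$ (k,a+l)) (-j) * ((c1 (i+j) @\<^sub>v c2 (i+j)) $ (a+l)))
          = (\<Sum>j\<in>{j. fls_nth (B $$ (k-a,l)) (-j) \<noteq> 0}. fls_nth (B $$ (k-a,l)) (-j) * (c2 (i+j) $ l))"
          by (simp only: e1 e2)
      qed
      moreover have "join (lca a A c1) (lca b B c2) i $ k = lca b B c2 i $ (k - a)"
        unfolding join_def using False k by simp
      ultimately show ?thesis by simp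
    qed
    finally show "lca (a+b) ?M (join c1 c2) i $ k = join (lca a A c1) (lca b B c2) i $ k" .
  qed
qed

lemma lca_pow_join:
  fixes A B :: "'a::comm_ring_1 fls mat"
  assumes A: "A \<in> carrier_mat a a" and B: "B \<in> carrier_mat b b"
    and c1: "\<forall>i. c1 i \<in> carrier_vec a" and c2: "\<forall>i. c2 i \<in> carrier_vec b"
  shows "(lca (a+b) (four_block_mat A (0\<^sub>m a b) (0\<^sub>m b a) B) ^^ l) (join c1 c2) =
    join ((lca a A ^^ l) c1) ((lca b B ^^ l) c2)"
proof (induct l)
  case (Suc l)
  show ?case using Suc
    by (simp add: lca_join[OF A B] lca_pow_carrier c1 c2)
qed simp

lemma join_at_zero:
  assumes "x \<in> carrier_vec a" "y \<in> carrier_vec b"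
  shows "x @\<^sub>v y = 0\<^sub>v (a+b) \<longleftrightarrow> x = 0\<^sub>v a \<and> y = 0\<^sub>v b"
proof -
  have "0\<^sub>v (a+b) = 0\<^sub>v a @\<^sub>v (0\<^sub>v b :: 'a::zero vec)"
    by (rule eq_vecI) auto
  then show ?thesis using assms by (simp add: append_vec_eq)
qed

lemma join_eq_zc:
  assumes c1: "\<forall>i. c1 i \<in> carrier_vec a" and c2: "\<forall>i. c2 i \<in> carrier_vec b"
  shows "join c1 c2 = zc (a+b) \<longleftrightarrow> c1 = zc a \<and> c2 = zc b"
proof -
  have "join c1 c2 = zc (a+b) \<longleftrightarrow> (\<forall>i. c1 i @\<^sub>v c2 i = 0\<^sub>v (a+b))"
    unfolding join_def zc_def by (simp add: fun_eq_iff)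
  also have "\<dots> \<longleftrightarrow> (\<forall>i. c1 i = 0\<^sub>v a \<and> c2 i = 0\<^sub>v b)"
    using join_at_zero c1 c2 by blast
  also have "\<dots> \<longleftrightarrow> c1 = zc a \<and> c2 = zc b" unfolding zc_def by (auto simp: fun_eq_iff)
  finally show ?thesis .
qed

lemma NEW_mono: "NEW n M r e \<Longrightarrow> r' \<le> r \<Longrightarrow> NEW n M r' e"
  unfolding NEW_def by force

lemma zc_carrier: "\<forall>i. zc n i \<in> carrier_vec n" unfolding zc_def by simp

lemma PE_four_block:
  fixes A B :: "'a::comm_ring_1 fls mat"
  assumes A: "A \<in> carrier_mat a a" and B: "B \<in> carrier_mat b b"
  shows "pos_expansive_lca (a+b) (four_block_mat A (0\<^sub>m a b) (0\<^sub>m b a) B) \<longleftrightarrow>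
    pos_expansive_lca a A \<and> pos_expansive_lca b B"
proof -
  let ?M = "four_block_mat A (0\<^sub>m a b) (0\<^sub>m b a) B"
  have pj: "(lca (a+b) ?M ^^ l) (join c1 c2) j = (lca a A ^^ l) c1 j @\<^sub>v (lca b B ^^ l) c2 j"
    if "\<forall>i. c1 i \<in> carrier_vec a" "\<forall>i. c2 i \<in> carrier_vec b" for c1 c2 l j
    using lca_pow_join[OF A B that, of l] unfolding join_def by metis
  have jc: "\<forall>i. join c1 c2 i \<in> carrier_vec (a+b)"
    if "\<forall>i. c1 i \<in> carrier_vec a" "\<forall>i. c2 i \<in> carrier_vec b" for c1 c2 :: "int \<Rightarrow> 'a vec"
    using that unfolding join_def by auto
  have wz: "((lca (a+b) ?M ^^ l) (join c1 c2) j = 0\<^sub>v (a+b)) \<longleftrightarrow>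
      (lca a A ^^ l) c1 j = 0\<^sub>v a \<and> (lca b B ^^ l) c2 j = 0\<^sub>v b"
    if "\<forall>i. c1 i \<in> carrier_vec a" "\<forall>i. c2 i \<in> carrier_vec b" for c1 c2 l j
    unfolding pj[OF that] by (rule join_at_zero[OF lca_pow_carrier[OF that(1)] lca_pow_carrier[OF that(2)]])
  have NA: "NEW (a+b) ?M r (join e1 (zc b))" if "NEW a A r e1" for r e1
  proof -
    have e1: "\<forall>i. e1 i \<in> carrier_vec a" "e1 \<noteq> zc a" using that unfolding NEW_def by auto
    show ?thesis unfolding NEW_def
    proof (intro conjI)
      show "\<forall>i. join e1 (zc b) i \<in> carrier_vec (a + b)" by (rule jc[OF e1(1) zc_carrier])
      show "join e1 (zc b) \<noteq> zc (a + b)" using join_eq_zc[OF e1(1) zc_carrier] e1(2) by blast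
      show "\<forall>l j. \<bar>j\<bar> \<le> int r \<longrightarrow> (lca (a + b) ?M ^^ l) (join e1 (zc b)) j = 0\<^sub>v (a + b)"
      proof (intro allI impI)
        fix l j assume "\<bar>j\<bar> \<le> int r"
        then show "(lca (a + b) ?M ^^ l) (join e1 (zc b)) j = 0\<^sub>v (a + b)"
          using wz[OF e1(1) zc_carrier] that unfolding NEW_def by (simp add: lca_pow_zc[unfolded zc_def] zc_def)
      qed
    qed
  qed
  have NB: "NEW (a+b) ?M r (join (zc a) e2)" if "NEW b B r e2" for r e2
  proof -
    have e2: "\<forall>i. e2 i \<in> carrier_vec b" "e2 \<noteq> zc b" using that unfolding NEW_def by auto
    show ?thesis unfolding NEW_def
    proof (intro conjI)
      show "\<forall>i. join (zc a) e2 i \<in> carrier_vec (a + b)" by (rule jc[OF zc_carrier e2(1)])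
      show "join (zc a) e2 \<noteq> zc (a + b)" using join_eq_zc[OF zc_carrier e2(1)] e2(2) by blast
      show "\<forall>l j. \<bar>j\<bar> \<le> int r \<longrightarrow> (lca (a + b) ?M ^^ l) (join (zc a) e2) j = 0\<^sub>v (a + b)"
      proof (intro allI impI)
        fix l j assume "\<bar>j\<bar> \<le> int r"
        then show "(lca (a + b) ?M ^^ l) (join (zc a) e2) j = 0\<^sub>v (a + b)"
          using wz[OF zc_carrier e2(1)] that unfolding NEW_def by (simp add: lca_pow_zc[unfolded zc_def] zc_def)
      qed
    qed
  qed
  have split: "NEW a A r (\<lambda>i. vec_first (e i) a) \<or> NEW b B r (\<lambda>i. vec_last (e i) b)"
    if "NEW (a+b) ?M r e" for r e
  proof -
    define e1 where "e1 = (\<lambda>i. vec_first (e i) a)"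
    define e2 where "e2 = (\<lambda>i. vec_last (e i) b)"
    have ec: "\<forall>i. e i \<in> carrier_vec (a+b)" "e \<noteq> zc (a+b)"
      and w: "\<forall>l j. \<bar>j\<bar> \<le> int r \<longrightarrow> (lca (a+b) ?M ^^ l) e j = 0\<^sub>v (a+b)"
      using that unfolding NEW_def by auto
    have c1: "\<forall>i. e1 i \<in> carrier_vec a" and c2: "\<forall>i. e2 i \<in> carrier_vec b"
      unfolding e1_def e2_def by auto
    have ej: "e = join e1 e2" unfolding join_def e1_def e2_def using ec(1) by auto
    have nz: "e1 \<noteq> zc a \<or> e2 \<noteq> zc b" using ec(2) join_eq_zc[OF c1 c2] ej by blast
    have w1: "(lca a A ^^ l) e1 j = 0\<^sub>v a" and w2: "(lca b B ^^ l) e2 j = 0\<^sub>v b" if "\<bar>j\<bar> \<le> int r" for l j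
      using w that wz[OF c1 c2, of l j] ej by auto
    show ?thesis using nz c1 c2 w1 w2 unfolding NEW_def e1_def[symmetric] e2_def[symmetric] by blast
  qed
  show ?thesis unfolding pos_exp_iff
  proof
    assume "\<exists>r. \<not> (\<exists>e. NEW (a + b) ?M r e)"
    then obtain r where r: "\<not> (\<exists>e. NEW (a + b) ?M r e)" by blast
    show "(\<exists>r. \<not> (\<exists>e. NEW a A r e)) \<and> (\<exists>r. \<not> (\<exists>e. NEW b B r e))"
      using r NA NB by blast
  next
    assume "(\<exists>r. \<not> (\<exists>e. NEW a A r e)) \<and> (\<exists>r. \<not> (\<exists>e. NEW b B r e))"
    then obtain r1 r2 where r1: "\<not> (\<exists>e. NEW a A r1 e)" and r2: "\<not> (\<exists>e. NEW b B r2 e)" by blast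
    show "\<exists>r. \<not> (\<exists>e. NEW (a + b) ?M r e)"
    proof (intro exI[of _ "max r1 r2"] notI)
      assume "\<exists>e. NEW (a + b) ?M (max r1 r2) e"
      then obtain e where "NEW (a + b) ?M (max r1 r2) e" by blast
      from split[OF this] show False using r1 r2 NEW_mono[of _ _ "max r1 r2"] by (meson max.cobounded1 max.cobounded2)
    qed
  qed
qed

lemma PE_dim0: "pos_expansive_lca 0 (M :: 'a::comm_ring_1 fls mat)"
  unfolding pos_exp_iff
proof (intro exI[of _ 0] notI)
  assume "\<exists>e. NEW 0 M 0 e"
  then obtain e :: "int \<Rightarrow> 'a vec" where "\<forall>i. e i \<in> carrier_vec 0" "e \<noteq> zc 0" unfolding NEW_def by blast
  moreover have "e i = 0\<^sub>v 0" if "e i \<in> carrier_vec 0" for i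
    by (rule eq_vecI) (use that in auto)
  ultimately show False unfolding zc_def by auto
qed

lemma PE_diag_block:
  fixes Cs :: "'a::comm_ring_1 fls mat list"
  assumes "\<And>C. C \<in> set Cs \<Longrightarrow> dim_row C = dim_col C"
  shows "pos_expansive_lca (sum_list (map dim_row Cs)) (diag_block_mat Cs) \<longleftrightarrow>
    (\<forall>C\<in>set Cs. pos_expansive_lca (dim_row C) C)"
  using assms
proof (induct Cs)
  case Nil show ?case using PE_dim0 by simp
next
  case (Cons C Cs)
  let ?B = "diag_block_mat Cs"
  have dA: "dim_col C = dim_row C" using Cons.prems by simp
  have A: "C \<in> carrier_mat (dim_row C) (dim_row C)" using dA unfolding carrier_mat_def by simp
  have mm: "map dim_row Cs = map dim_col Cs" using Cons.prems by (intro map_cong) auto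
  have dB: "dim_col ?B = dim_row ?B" by (simp only: dim_diag_block_mat mm)
  have dBr: "dim_row ?B = sum_list (map dim_row Cs)" by (simp only: dim_diag_block_mat)
  then have B: "?B \<in> carrier_mat (sum_list (map dim_row Cs)) (sum_list (map dim_row Cs))"
    using dB unfolding carrier_mat_def by simp
  have e: "diag_block_mat (C # Cs) =
     four_block_mat C (0\<^sub>m (dim_row C) (sum_list (map dim_row Cs))) (0\<^sub>m (sum_list (map dim_row Cs)) (dim_row C)) ?B"
    unfolding diag_block_mat.simps Let_def dA dB dBr ..
  show ?case unfolding e using PE_four_block[OF A B] Cons by simp
qed

definition RS :: "(nat \<Rightarrow> int \<Rightarrow> 'a::comm_ring_1) \<Rightarrow> nat \<Rightarrow> int \<Rightarrow> (nat \<Rightarrow> int \<Rightarrow> 'a) \<Rightarrow> nat \<Rightarrow> int \<Rightarrow> 'a" where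
  "RS b d K y l x = (\<Sum>m\<le>d. \<Sum>j\<in>{-K..K}. b m j * y (l + m) (x - j))"

definition recur :: "(nat \<Rightarrow> int \<Rightarrow> 'a::comm_ring_1) \<Rightarrow> nat \<Rightarrow> int \<Rightarrow> (nat \<Rightarrow> int \<Rightarrow> 'a) \<Rightarrow> bool" where
  "recur b d K y \<longleftrightarrow> (\<forall>l x. RS b d K y l x = 0)"

definition bnd :: "(nat \<Rightarrow> int \<Rightarrow> 'a::zero) \<Rightarrow> int \<Rightarrow> bool" where
  "bnd b K \<longleftrightarrow> (\<forall>m j. K < \<bar>j\<bar> \<longrightarrow> b m j = 0)"

definition mirb :: "(nat \<Rightarrow> int \<Rightarrow> 'a) \<Rightarrow> nat \<Rightarrow> int \<Rightarrow> 'a" where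
  "mirb b = (\<lambda>m j. b m (-j))"

lemma sum_single:
  assumes "finite A" "a \<in> A" "\<And>x. x \<in> A \<Longrightarrow> x \<noteq> a \<Longrightarrow> f x = 0"
  shows "sum f A = f a"
proof -
  have "sum f A = f a + sum f (A - {a})" by (rule sum.remove[OF assms(1,2)])
  also have "sum f (A - {a}) = 0" by (rule sum.neutral) (use assms(3) in auto)
  finally show ?thesis by simp
qed

lemma sum_sym_reindex: "(\<Sum>j\<in>{-K..K::int}. f j) = (\<Sum>j\<in>{-K..K}. f (-j))"
  by (rule sum.reindex_bij_witness[of _ uminus uminus]) auto

lemma RS_mirror: "RS (mirb b) d K (\<lambda>l x. y l (-x)) l x = RS b d K y l (-x)"
  unfolding RS_def mirb_def
  by (rule sum.cong[OF refl], subst sum_sym_reindex) (simp add: algebra_simps)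

lemma recur_mirror: "recur (mirb b) d K (\<lambda>l x. y l (-x)) \<longleftrightarrow> recur b d K y"
  unfolding recur_def RS_mirror by (metis minus_minus)

lemma bnd_mirror: "bnd (mirb b) K \<longleftrightarrow> bnd b K"
  unfolding bnd_def mirb_def by (metis abs_minus_cancel minus_minus)

lemma prop_right:
  fixes b :: "nat \<Rightarrow> int \<Rightarrow> 'a::field"
  assumes rec: "recur b d K y" and bd: "bnd b K"
    and j0: "b 0 j0 \<noteq> 0" and j0b: "\<forall>j<j0. b 0 j = 0" and j0m: "\<forall>m\<in>{1..d}. \<forall>j\<le>j0. b m j = 0"
    and zero: "\<forall>l z. a \<le> z \<and> z \<le> a + 2 * K \<longrightarrow> y l z = 0"
  shows "\<forall>l z. a \<le> z \<longrightarrow> y l z = 0"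
proof -
  have j0K: "\<bar>j0\<bar> \<le> K" using bd j0 unfolding bnd_def by (meson not_le)
  have step: "\<forall>l z. a \<le> z \<and> z \<le> a + 2 * K + int n \<longrightarrow> y l z = 0" for n
  proof (induct n)
    case 0 then show ?case using zero by simp
  next
    case (Suc n)
    show ?case
    proof (intro allI impI)
      fix l z assume z: "a \<le> z \<and> z \<le> a + 2 * K + int (Suc n)"
      show "y l z = 0"
      proof (cases "z \<le> a + 2 * K + int n")
        case True then show ?thesis using Suc z by blast
      next
        case False
        then have zz: "z = a + 2 * K + int n + 1" using z by simp
        define x where "x = z + j0"
        have terms: "b m j * y (l + m) (x - j) = 0" if "m \<le> d" "j \<in> {-K..K}" "(m, j) \<noteq> (0, j0)" for m j
        proof (cases "b m j = 0")
          case False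
          have "j0 < j"
          proof (cases "m = 0")
            case True
            then have "j \<noteq> j0" using that by simp
            moreover have "\<not> j < j0" using j0b False True by blast
            ultimately show ?thesis by simp
          next
            case False2: False
            then have "m \<in> {1..d}" using that by simp
            then show ?thesis using j0m False by (meson not_le)
          qed
          then have "a \<le> x - j \<and> x - j \<le> a + 2 * K + int n" using that zz j0K unfolding x_def by auto
          then show ?thesis using Suc by simp
        qed simp
        have "RS b d K y l x = (\<Sum>j\<in>{-K..K}. b 0 j * y (l + 0) (x - j))"
          unfolding RS_def
        proof (rule sum_single)
          fix m assume "m \<in> {..d}" "m \<noteq> 0"
          then show "(\<Sum>j\<in>{-K..K}. b m j * y (l + m) (x - j)) = 0"
            using terms by (intro sum.neutral) auto
        qed auto
        also have "\<dots> = b 0 j0 * y (l + 0) (x - j0)"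
        proof (rule sum_single)
          fix j assume "j \<in> {-K..K}" "j \<noteq> j0"
          then show "b 0 j * y (l + 0) (x - j) = 0" using terms[of 0 j] by simp
        qed (use j0K in auto)
        finally have "b 0 j0 * y l z = 0" using rec unfolding recur_def x_def by simp
        then show ?thesis using j0 by simp
      qed
    qed
  qed
  show ?thesis
  proof (intro allI impI)
    fix l z assume "a \<le> z"
    then have "a \<le> z \<and> z \<le> a + 2 * K + int (nat (z - a))" using j0K by simp
    then show "y l z = 0" using step by blast
  qed
qed

lemma prop_left:
  fixes b :: "nat \<Rightarrow> int \<Rightarrow> 'a::field"
  assumes rec: "recur b d K y" and bd: "bnd b K"
    and j0: "b 0 j0 \<noteq> 0" and j0b: "\<forall>j>j0. b 0 j = 0" and j0m: "\<forall>m\<in>{1..d}. \<forall>j\<ge>j0. b m j = 0"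
    and zero: "\<forall>l z. a - 2 * K \<le> z \<and> z \<le> a \<longrightarrow> y l z = 0"
  shows "\<forall>l z. z \<le> a \<longrightarrow> y l z = 0"
proof -
  have "\<forall>l z. - a \<le> z \<longrightarrow> y l (- z) = 0"
  proof (rule prop_right[of "mirb b" d K "\<lambda>l x. y l (-x)" "-j0"])
    show "recur (mirb b) d K (\<lambda>l x. y l (- x))" using rec recur_mirror by blast
    show "bnd (mirb b) K" using bd bnd_mirror by blast
    show "mirb b 0 (- j0) \<noteq> 0" using j0 unfolding mirb_def by simp
    show "\<forall>j< - j0. mirb b 0 j = 0" using j0b unfolding mirb_def by simp
    show "\<forall>m\<in>{1..d}. \<forall>j\<le> - j0. mirb b m j = 0" using j0m unfolding mirb_def by simp
    show "\<forall>l z. - a \<le> z \<and> z \<le> - a + 2 * K \<longrightarrow> y l (- z) = 0" using zero by simp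
  qed
  then show ?thesis by (metis minus_le_iff minus_minus)
qed

function Yc :: "(nat \<Rightarrow> int \<Rightarrow> 'a::field) \<Rightarrow> nat \<Rightarrow> int \<Rightarrow> int \<Rightarrow> nat \<Rightarrow> int \<Rightarrow> nat \<Rightarrow> int \<Rightarrow> 'a" where
  "Yc b d K J m1 c0 l c = (if c0 < c then 0 else if l < m1 then (if l = 0 \<and> c = c0 then 1 else 0) else
     - inverse (b m1 J) * ((\<Sum>m<m1. b m J * Yc b d K J m1 c0 (l - m1 + m) c) +
        (\<Sum>m\<le>d. \<Sum>j\<in>{-K..<J}. b m j * Yc b d K J m1 c0 (l - m1 + m) (c + J - j))))"
  by pat_completeness auto
termination
  by (relation "measures [\<lambda>(b,d,K,J,m1,c0,l,c). nat (c0 + 1 - c), \<lambda>(b,d,K,J,m1,c0,l,c). l]") auto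

declare Yc.simps[simp del]

lemma construct_left:
  fixes b :: "nat \<Rightarrow> int \<Rightarrow> 'a::field"
  assumes JK: "\<bar>J\<bar> \<le> K" and Jtop: "\<forall>m\<le>d. \<forall>j>J. b m j = 0"
    and m1: "0 < m1" "m1 \<le> d" "b m1 J \<noteq> 0" and m1max: "\<forall>m. m1 < m \<and> m \<le> d \<longrightarrow> b m J = 0"
  shows "recur b d K (Yc b d K J m1 c0) \<and> Yc b d K J m1 c0 0 c0 \<noteq> 0 \<and>
    (\<forall>l x. c0 < x \<longrightarrow> Yc b d K J m1 c0 l x = 0)"
proof -
  define Y where "Y = Yc b d K J m1 c0"
  have Y0: "Y l c = 0" if "c0 < c" for l c
    unfolding Y_def using that by (subst Yc.simps) simp
  have Yc0: "Y 0 c0 = 1" unfolding Y_def using m1 by (subst Yc.simps) simp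
  have Yrec: "Y (l + m1) c = - inverse (b m1 J) * ((\<Sum>m<m1. b m J * Y (l + m) c) +
        (\<Sum>m\<le>d. \<Sum>j\<in>{-K..<J}. b m j * Y (l + m) (c + J - j)))" if "c \<le> c0" for l c
    unfolding Y_def using that by (subst Yc.simps) simp
  have rec: "RS b d K Y l x = 0" for l x
  proof (cases "c0 < x - J")
    case True
    show ?thesis unfolding RS_def
    proof (rule sum.neutral, rule ballI, rule sum.neutral, rule ballI)
      fix m j assume m: "m \<in> {..d}" and j: "j \<in> {-K..K}"
      show "b m j * Y (l + m) (x - j) = 0"
      proof (cases "J < j")
        case True then show ?thesis using Jtop m by simp
      next
        case False then show ?thesis using Y0[of "x - j"] \<open>c0 < x - J\<close> by simp
      qed
    qed
  next
    case False
    define c where "c = x - J"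
    have c: "c \<le> c0" using False unfolding c_def by simp
    define T where "T = (\<lambda>m j. b m j * Y (l + m) (x - j))"
    have split_j: "(\<Sum>j\<in>{-K..K}. T m j) = (\<Sum>j\<in>{-K..<J}. T m j) + T m J" if "m \<le> d" for m
    proof -
      have "{-K..K} = {-K..<J} \<union> {J..K}" using JK by auto
      then have "(\<Sum>j\<in>{-K..K}. T m j) = (\<Sum>j\<in>{-K..<J}. T m j) + (\<Sum>j\<in>{J..K}. T m j)"
        by (simp, subst sum.union_disjoint) auto
      also have "(\<Sum>j\<in>{J..K}. T m j) = T m J"
        by (rule sum_single) (use JK Jtop that in \<open>auto simp: T_def\<close>)
      finally show ?thesis .
    qed
    have split_m: "(\<Sum>m\<le>d. T m J) = (\<Sum>m<m1. T m J) + T m1 J"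
    proof -
      have "{..d} = {..<m1} \<union> {m1..d}" using m1 by auto
      then have "(\<Sum>m\<le>d. T m J) = (\<Sum>m<m1. T m J) + (\<Sum>m\<in>{m1..d}. T m J)"
        by (simp, subst sum.union_disjoint) auto
      also have "(\<Sum>m\<in>{m1..d}. T m J) = T m1 J"
        by (rule sum_single) (use m1 m1max in \<open>auto simp: T_def\<close>)
      finally show ?thesis .
    qed
    have S2: "(\<Sum>m\<le>d. \<Sum>j\<in>{-K..<J}. b m j * Y (l + m) (c + J - j)) = (\<Sum>m\<le>d. \<Sum>j\<in>{-K..<J}. T m j)"
      unfolding T_def c_def by simp
    have S1: "(\<Sum>m<m1. b m J * Y (l + m) c) = (\<Sum>m<m1. T m J)"
      unfolding T_def c_def by simp
    have TJ: "T m1 J = b m1 J * Y (l + m1) c" unfolding T_def c_def by simp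
    have "RS b d K Y l x = (\<Sum>m\<le>d. \<Sum>j\<in>{-K..K}. T m j)" unfolding RS_def T_def ..
    also have "\<dots> = (\<Sum>m\<le>d. (\<Sum>j\<in>{-K..<J}. T m j) + T m J)"
      by (rule sum.cong[OF refl]) (simp add: split_j)
    also have "\<dots> = (\<Sum>m\<le>d. \<Sum>j\<in>{-K..<J}. T m j) + ((\<Sum>m<m1. T m J) + T m1 J)"
      by (simp add: sum.distrib split_m)
    also have "\<dots> = 0"
      unfolding TJ Yrec[OF c] S1 S2 using m1(3) by (simp add: field_simps)
    finally show ?thesis .
  qed
  show ?thesis unfolding Y_def[symmetric] recur_def using rec Yc0 Y0 by simp
qed

lemma construct_right:
  fixes b :: "nat \<Rightarrow> int \<Rightarrow> 'a::field"
  assumes JK: "\<bar>J\<bar> \<le> K" and Jtop: "\<forall>m\<le>d. \<forall>j<J. b m j = 0"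
    and m1: "0 < m1" "m1 \<le> d" "b m1 J \<noteq> 0" and m1max: "\<forall>m. m1 < m \<and> m \<le> d \<longrightarrow> b m J = 0"
  shows "\<exists>y. recur b d K y \<and> y 0 c0 \<noteq> 0 \<and> (\<forall>l x. x < c0 \<longrightarrow> y l x = 0)"
proof -
  let ?Y = "Yc (mirb b) d K (-J) m1 (-c0)"
  have h: "recur (mirb b) d K ?Y \<and> ?Y 0 (-c0) \<noteq> 0 \<and> (\<forall>l x. -c0 < x \<longrightarrow> ?Y l x = 0)"
  proof (rule construct_left)
    show "\<bar>- J\<bar> \<le> K" using JK by simp
    show "\<forall>m\<le>d. \<forall>j> - J. mirb b m j = 0" using Jtop unfolding mirb_def by (metis neg_less_iff_less minus_minus)
    show "0 < m1" "m1 \<le> d" using m1 by auto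
    show "mirb b m1 (- J) \<noteq> 0" using m1 unfolding mirb_def by simp
    show "\<forall>m. m1 < m \<and> m \<le> d \<longrightarrow> mirb b m (- J) = 0" using m1max unfolding mirb_def by simp
  qed
  define y where "y = (\<lambda>l x. ?Y l (-x))"
  have "recur (mirb b) d K (\<lambda>l x. y l (-x))" using h unfolding y_def by simp
  then have "recur b d K y" using recur_mirror by blast
  moreover have "y 0 c0 \<noteq> 0" using h unfolding y_def by simp
  moreover have "\<forall>l x. x < c0 \<longrightarrow> y l x = 0" using h unfolding y_def by simp
  ultimately show ?thesis by blast
qed

lemma construct_left':
  fixes b :: "nat \<Rightarrow> int \<Rightarrow> 'a::field"
  assumes JK: "\<bar>J\<bar> \<le> K" and Jtop: "\<forall>m\<le>d. \<forall>j>J. b m j = 0"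
    and m1: "0 < m1" "m1 \<le> d" "b m1 J \<noteq> 0" and m1max: "\<forall>m. m1 < m \<and> m \<le> d \<longrightarrow> b m J = 0"
  shows "\<exists>y. recur b d K y \<and> y 0 c0 \<noteq> 0 \<and> (\<forall>l x. c0 < x \<longrightarrow> y l x = 0)"
  using construct_left[OF assms] by blast

definition conv :: "'a::comm_ring_1 fls \<Rightarrow> int \<Rightarrow> (int \<Rightarrow> 'a) \<Rightarrow> int \<Rightarrow> 'a" where
  "conv \<beta> K s x = (\<Sum>j\<in>{-K..K}. fls_nth \<beta> j * s (x - j))"

lemma sum_supp_interval:
  fixes f :: "'a::comm_ring_1 fls"
  assumes "lpb f K"
  shows "(\<Sum>j\<in>{j. fls_nth f (-j) \<noteq> 0}. fls_nth f (-j) * g j) = (\<Sum>j\<in>{-int K..int K}. fls_nth f (-j) * g j)"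
proof (rule sum.mono_neutral_left)
  show "{j. fls_nth f (- j) \<noteq> 0} \<subseteq> {- int K..int K}"
  proof
    fix j assume "j \<in> {j. fls_nth f (- j) \<noteq> 0}"
    then have "\<not> int K < \<bar>- j\<bar>" using assms unfolding lpb_def by auto
    then show "j \<in> {- int K..int K}" by (simp add: abs_le_iff not_less)
  qed
qed auto

lemma conv_one: "0 \<le> K \<Longrightarrow> conv 1 K s x = s x"
  unfolding conv_def by (subst sum_single[of _ 0]) auto

lemma conv_cong: "(\<And>z. \<bar>z - x\<bar> \<le> K \<Longrightarrow> s z = s' z) \<Longrightarrow> conv \<beta> K s x = conv \<beta> K s' x"
  unfolding conv_def by (intro sum.cong refl) auto

lemma conv_zero: "(\<And>z. \<bar>z - x\<bar> \<le> K \<Longrightarrow> s z = 0) \<Longrightarrow> conv \<beta> K s x = 0"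
  unfolding conv_def by (intro sum.neutral) auto

locale comp =
  fixes \<pi> :: "'a::field fls poly" and K :: nat
  assumes lp: "is_lp_tpoly \<pi>" and mon: "lead_coeff \<pi> = 1" and dpos: "0 < degree \<pi>"
    and cb: "cbound \<pi> K"
begin

abbreviation "d \<equiv> degree \<pi>"
abbreviation "F \<equiv> lca (degree \<pi>) (companion_mat \<pi>)"
abbreviation "\<beta> m \<equiv> Polynomial.coeff \<pi> m"
abbreviation "bb \<equiv> (\<lambda>m j. fls_nth (Polynomial.coeff \<pi> m) j)"

lemma lpb_beta: "lpb (\<beta> m) K" using cb unfolding cbound_def by simp

lemma lpbC: "k < d \<Longrightarrow> l < d \<Longrightarrow> lpb (companion_mat \<pi> $$ (k,l)) K"
  using lpb_beta unfolding companion_index lpb_def by auto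

lemma conv_d: "conv (\<beta> d) (int K) s x = s x"
  using mon conv_one[of "int K"] by simp

lemma F_entry:
  assumes k: "k < d"
  shows "F c x $ k = (if k = 0 then 0 else c x $ (k - 1)) - conv (\<beta> k) (int K) (\<lambda>z. c z $ (d - 1)) x"
proof -
  define g where "g = (\<lambda>l. (if l = d - 1 then - conv (\<beta> k) (int K) (\<lambda>z. c z $ (d - 1)) x else 0)
     + (if k = l + 1 then c x $ l else 0))"
  have inner: "(\<Sum>j\<in>{-int K..int K}. fls_nth (companion_mat \<pi> $$ (k,l)) (-j) * c (x + j) $ l) = g l"
    if l: "l < d" for l
  proof (cases "l = d - 1")
    case True
    then have nk: "k \<noteq> l + 1" using k dpos by simp
    have "(\<Sum>j\<in>{-int K..int K}. fls_nth (companion_mat \<pi> $$ (k,l)) (-j) * c (x + j) $ l)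
        = (\<Sum>j\<in>{-int K..int K}. - (fls_nth (\<beta> k) (-j) * c (x + j) $ (d - 1)))"
      using True k l by (simp add: companion_index)
    also have "\<dots> = - (\<Sum>j\<in>{-int K..int K}. fls_nth (\<beta> k) j * c (x - j) $ (d - 1))"
      by (subst sum_sym_reindex) (simp add: sum_negf)
    finally show ?thesis unfolding g_def conv_def using True nk by simp
  next
    case False
    show ?thesis
    proof (cases "k = l + 1")
      case True
      have "(\<Sum>j\<in>{-int K..int K}. fls_nth (companion_mat \<pi> $$ (k,l)) (-j) * c (x + j) $ l)
          = (\<Sum>j\<in>{-int K..int K}. (if j = 0 then 1 else 0) * c (x + j) $ l)"
        using True False k l by (simp add: companion_index)
      also have "\<dots> = c x $ l" by (subst sum_single[of _ 0]) auto
      finally show ?thesis unfolding g_def using True False by simp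
    next
      case False2: False
      then show ?thesis unfolding g_def using False k l by (simp add: companion_index)
    qed
  qed
  have "F c x $ k = (\<Sum>l<d. \<Sum>j\<in>{-int K..int K}. fls_nth (companion_mat \<pi> $$ (k,l)) (-j) * c (x + j) $ l)"
    unfolding lca_index[OF k] by (intro sum.cong refl sum_supp_interval lpbC k) simp
  also have "\<dots> = (\<Sum>l<d. g l)" by (intro sum.cong refl inner) simp
  also have "\<dots> = - conv (\<beta> k) (int K) (\<lambda>z. c z $ (d - 1)) x + (if k = 0 then 0 else c x $ (k - 1))"
  proof -
    have s1: "(\<Sum>l<d. (if l = d - 1 then - conv (\<beta> k) (int K) (\<lambda>z. c z $ (d - 1)) x else 0))
        = - conv (\<beta> k) (int K) (\<lambda>z. c z $ (d - 1)) x"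
      using dpos by (subst sum_single[of _ "d - 1"]) auto
    have s2: "(\<Sum>l<d. (if k = l + 1 then c x $ l else 0)) = (if k = 0 then 0 else c x $ (k - 1))"
    proof (cases "k = 0")
      case True then show ?thesis by simp
    next
      case False
      then show ?thesis using k by (subst sum_single[of _ "k - 1"]) auto
    qed
    show ?thesis unfolding g_def sum.distrib s1 s2 ..
  qed
  finally show ?thesis by simp
qed

lemma E_step:
  assumes k: "k < d"
  shows "(F ^^ Suc l) e x $ k = (if k = 0 then 0 else (F ^^ l) e x $ (k - 1))
     - conv (\<beta> k) (int K) (\<lambda>z. (F ^^ l) e z $ (d - 1)) x"
  using F_entry[OF k] by simp

lemma claimA:
  assumes k: "k < d"
  shows "(F ^^ (l + k + 1)) e x $ k = - (\<Sum>m\<le>k. conv (\<beta> m) (int K) (\<lambda>z. (F ^^ (l + m)) e z $ (d - 1)) x)"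
  using k
proof (induct k)
  case 0
  show ?case using E_step[OF 0] by simp
next
  case (Suc k)
  have "(F ^^ (l + Suc k + 1)) e x $ Suc k = (F ^^ Suc (l + k + 1)) e x $ Suc k" by simp
  also have "\<dots> = (F ^^ (l + k + 1)) e x $ k - conv (\<beta> (Suc k)) (int K) (\<lambda>z. (F ^^ (l + k + 1)) e z $ (d - 1)) x"
    unfolding E_step[OF Suc.prems] by simp
  also have "\<dots> = - (\<Sum>m\<le>Suc k. conv (\<beta> m) (int K) (\<lambda>z. (F ^^ (l + m)) e z $ (d - 1)) x)"
    using Suc by simp
  finally show ?case .
qed

lemma orbit_recur:
  "recur bb d (int K) (\<lambda>l z. (F ^^ l) e z $ (d - 1))"
  unfolding recur_def
proof (intro allI)
  fix l x
  let ?Y = "\<lambda>l z. (F ^^ l) e z $ (d - 1)"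
  have RSc: "RS bb d (int K) ?Y l x = (\<Sum>m\<le>d. conv (\<beta> m) (int K) (?Y (l + m)) x)"
    unfolding RS_def conv_def ..
  have d1: "d - 1 < d" "l + (d - 1) + 1 = l + d" using dpos by auto
  have A: "?Y (l + d) x = - (\<Sum>m\<le>d - 1. conv (\<beta> m) (int K) (?Y (l + m)) x)"
    using claimA[OF d1(1), of l e x] unfolding d1(2) .
  have "{..d} = insert d {..d - 1}" using dpos by auto
  then have "(\<Sum>m\<le>d. conv (\<beta> m) (int K) (?Y (l + m)) x) =
      conv (\<beta> d) (int K) (?Y (l + d)) x + (\<Sum>m\<le>d - 1. conv (\<beta> m) (int K) (?Y (l + m)) x)"
    using dpos by simp
  also have "\<dots> = 0" unfolding conv_d A by simp
  finally show "RS bb d (int K) ?Y l x = 0" unfolding RSc .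
qed

lemma claimB:
  assumes Y: "\<forall>l z. (F ^^ l) e z $ (d - 1) = 0"
  shows "\<forall>l x. \<forall>k<d. (F ^^ l) e x $ k = 0"
proof -
  have "\<forall>k. k < d \<longrightarrow> d - 1 - k = n \<longrightarrow> (\<forall>l x. (F ^^ l) e x $ k = 0)" for n
  proof (induct n)
    case 0
    show ?case
    proof (intro allI impI)
      fix k l x assume "k < d" "d - 1 - k = 0"
      then have "k = d - 1" by arith
      then show "(F ^^ l) e x $ k = 0" using Y by simp
    qed
  next
    case (Suc n)
    show ?case
    proof (intro allI impI)
      fix k l x assume k: "k < d" "d - 1 - k = Suc n"
      then have k1: "Suc k < d" "d - 1 - Suc k = n" by auto
      have "(F ^^ Suc l) e x $ Suc k = (F ^^ l) e x $ k - conv (\<beta> (Suc k)) (int K) (\<lambda>z. (F ^^ l) e z $ (d - 1)) x"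
        using E_step[OF k1(1)] by simp
      moreover have "(F ^^ Suc l) e x $ Suc k = 0" using Suc k1 by blast
      moreover have "conv (\<beta> (Suc k)) (int K) (\<lambda>z. (F ^^ l) e z $ (d - 1)) x = 0"
        by (rule conv_zero) (use Y in blast)
      ultimately show "(F ^^ l) e x $ k = 0" by simp
    qed
  qed
  then show ?thesis by blast
qed

definition G :: "(nat \<Rightarrow> int \<Rightarrow> 'a) \<Rightarrow> nat \<Rightarrow> int \<Rightarrow> 'a vec" where
  "G y l x = vec d (\<lambda>k. \<Sum>m\<in>{k+1..d}. conv (\<beta> m) (int K) (y (l + m - k - 1)) x)"

lemma G_last: "G y l x $ (d - 1) = y l x"
proof -
  have "G y l x $ (d - 1) = (\<Sum>m\<in>{d..d}. conv (\<beta> m) (int K) (y (l + m - (d - 1) - 1)) x)"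
    unfolding G_def using dpos by simp
  also have "\<dots> = y l x" using dpos by (simp add: conv_d)
  finally show ?thesis .
qed

lemma G_step:
  assumes rec: "recur bb d (int K) y"
  shows "F (G y l) = G y (Suc l)"
proof
  fix x
  show "F (G y l) x = G y (Suc l) x"
  proof (rule eq_vecI)
    show "dim_vec (F (G y l) x) = dim_vec (G y (Suc l) x)" unfolding G_def by simp
    fix k assume "k < dim_vec (G y (Suc l) x)"
    then have k: "k < d" unfolding G_def by simp
    have cv: "conv (\<beta> k) (int K) (\<lambda>z. G y l z $ (d - 1)) x = conv (\<beta> k) (int K) (y l) x"
      unfolding G_last ..
    have RS0: "(\<Sum>m\<le>d. conv (\<beta> m) (int K) (y (l + m)) x) = 0"
      using rec unfolding recur_def RS_def conv_def by simp
    show "F (G y l) x $ k = G y (Suc l) x $ k"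
    proof (cases "k = 0")
      case True
      have "{..d} = insert 0 {1..d}" by auto
      then have "(\<Sum>m\<le>d. conv (\<beta> m) (int K) (y (l + m)) x) =
          conv (\<beta> 0) (int K) (y l) x + (\<Sum>m\<in>{1..d}. conv (\<beta> m) (int K) (y (l + m)) x)"
        by simp
      then have "conv (\<beta> 0) (int K) (y l) x + (\<Sum>m\<in>{1..d}. conv (\<beta> m) (int K) (y (l + m)) x) = 0"
        using RS0 by simp
      then have "- conv (\<beta> 0) (int K) (y l) x = (\<Sum>m\<in>{1..d}. conv (\<beta> m) (int K) (y (l + m)) x)"
        by (rule minus_unique)
      moreover have "G y (Suc l) x $ 0 = (\<Sum>m\<in>{1..d}. conv (\<beta> m) (int K) (y (l + m)) x)"
        unfolding G_def using dpos by (intro trans[OF index_vec] sum.cong) auto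
      ultimately show ?thesis using F_entry[OF k] cv True by simp
    next
      case False
      have km: "k - 1 < d" using k by simp
      have "{k..d} = insert k {k+1..d}" using k by auto
      then have "G y l x $ (k - 1) = conv (\<beta> k) (int K) (y l) x + (\<Sum>m\<in>{k+1..d}. conv (\<beta> m) (int K) (y (l + m - k)) x)"
        unfolding G_def using False k by simp
      moreover have "G y (Suc l) x $ k = (\<Sum>m\<in>{k+1..d}. conv (\<beta> m) (int K) (y (l + m - k)) x)"
        unfolding G_def using k by (intro trans[OF index_vec] sum.cong) auto
      ultimately show ?thesis using F_entry[OF k] cv False by simp
    qed
  qed
qed

lemma G_pow:
  assumes rec: "recur bb d (int K) y"
  shows "(F ^^ l) (G y 0) = G y l"
  by (induct l) (simp_all add: G_step[OF rec])

lemma G_window: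
  assumes "\<forall>l z. \<bar>z\<bar> \<le> int R + int K \<longrightarrow> y l z = 0" "\<bar>x\<bar> \<le> int R"
  shows "G y l x = 0\<^sub>v d"
proof (rule eq_vecI)
  fix k assume "k < dim_vec (0\<^sub>v d :: 'a vec)"
  then have k: "k < d" by simp
  have "conv (\<beta> m) (int K) (y (l + m - k - 1)) x = 0" for m
    by (rule conv_zero) (use assms in auto)
  then show "G y l x $ k = 0\<^sub>v d $ k" unfolding G_def using k by simp
qed (simp add: G_def)

lemma G_NEW:
  assumes rec: "recur bb d (int K) y" and w: "\<forall>l z. \<bar>z\<bar> \<le> int R + int K \<longrightarrow> y l z = 0"
    and nz: "y 0 c \<noteq> 0"
  shows "NEW d (companion_mat \<pi>) R (G y 0)"
  unfolding NEW_def
proof (intro conjI)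
  show "\<forall>i. G y 0 i \<in> carrier_vec d" unfolding G_def by simp
  show "G y 0 \<noteq> zc d"
  proof
    assume "G y 0 = zc d"
    then have "G y 0 c $ (d - 1) = 0" unfolding zc_def using dpos by simp
    then show False using nz G_last by simp
  qed
  show "\<forall>l j. \<bar>j\<bar> \<le> int R \<longrightarrow> (F ^^ l) (G y 0) j = 0\<^sub>v d"
    using G_pow[OF rec] G_window[OF w] by simp
qed

end

lemma Esg_top:
  fixes P :: "'a::field fls poly"
  assumes lp: "is_lp_tpoly P" and mon: "lead_coeff P = 1" and d: "0 < degree P"
    and sg: "\<sigma> = 1 \<or> \<sigma> = -1"
  shows "Esg \<sigma> P \<longleftrightarrow> (\<forall>m\<in>{1..degree P}. fls_nth (Polynomial.coeff P m) (\<sigma> * tp \<sigma> P) = 0)"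
proof -
  have "degree (TF \<sigma> P) = 0 \<longleftrightarrow> (\<forall>m\<in>{1..degree P}. fls_nth (Polynomial.coeff P m) (\<sigma> * tp \<sigma> P) = 0)"
  proof
    assume h: "degree (TF \<sigma> P) = 0"
    show "\<forall>m\<in>{1..degree P}. fls_nth (Polynomial.coeff P m) (\<sigma> * tp \<sigma> P) = 0"
    proof
      fix m assume "m \<in> {1..degree P}"
      then have "degree (TF \<sigma> P) < m" using h by simp
      then have "Polynomial.coeff (TF \<sigma> P) m = 0" by (rule coeff_eq_0)
      then show "fls_nth (Polynomial.coeff P m) (\<sigma> * tp \<sigma> P) = 0" unfolding TF_def coeff_topform .
    qed
  next
    assume h: "\<forall>m\<in>{1..degree P}. fls_nth (Polynomial.coeff P m) (\<sigma> * tp \<sigma> P) = 0"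
    have "Polynomial.coeff (TF \<sigma> P) i = 0" if "0 < i" for i
    proof (cases "i \<le> degree P")
      case True then show ?thesis using h that unfolding TF_def coeff_topform by auto
    next
      case False then show ?thesis unfolding TF_def coeff_topform by (simp add: coeff_eq_0)
    qed
    then show "degree (TF \<sigma> P) = 0" using degree_le[of 0 "TF \<sigma> P"] by simp
  qed
  then show ?thesis using Esg_iff_TF[OF lp mon d sg] by simp
qed

context comp
begin

lemma bnd_bb: "bnd bb (int K)"
  using lpb_beta unfolding bnd_def lpb_def by simp

lemma Pnz: "\<pi> \<noteq> 0" using mon by auto

lemma top_facts:
  assumes sg: "\<sigma> = 1 \<or> \<sigma> = -1"
  shows "\<forall>m n. tp \<sigma> \<pi> < n \<longrightarrow> bb m (\<sigma> * n) = 0"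
    and "\<exists>m\<le>d. bb m (\<sigma> * tp \<sigma> \<pi>) \<noteq> 0"
proof -
  have t: "istop \<sigma> \<pi> (tp \<sigma> \<pi>)" by (rule istop_tp[OF lp Pnz sg])
  then show "\<forall>m n. tp \<sigma> \<pi> < n \<longrightarrow> bb m (\<sigma> * n) = 0" unfolding istop_def by blast
  from t obtain m where m: "bb m (\<sigma> * tp \<sigma> \<pi>) \<noteq> 0" unfolding istop_def by blast
  have "m \<le> d"
  proof (rule ccontr)
    assume "\<not> m \<le> d"
    then have "\<beta> m = 0" by (simp add: coeff_eq_0)
    then show False using m by simp
  qed
  with m show "\<exists>m\<le>d. bb m (\<sigma> * tp \<sigma> \<pi>) \<noteq> 0" by blast
qed

lemma bb_bound: "bb m j \<noteq> 0 \<Longrightarrow> \<bar>j\<bar> \<le> int K"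
  using bnd_bb unfolding bnd_def by (meson not_le)

lemma comp_PE_if:
  assumes E1: "Esg 1 \<pi>" and E2: "Esg (-1) \<pi>"
  shows "pos_expansive_lca d (companion_mat \<pi>)"
proof -
  define A1 where "A1 = tp 1 \<pi>"
  define A2 where "A2 = tp (-1) \<pi>"
  have s1: "(1::int) = 1 \<or> (1::int) = -1" and s2: "(-1::int) = 1 \<or> (-1::int) = -1" by auto
  have z1: "\<forall>m\<in>{1..d}. bb m A1 = 0" using E1 Esg_top[OF lp mon dpos s1] unfolding A1_def by simp
  have z2: "\<forall>m\<in>{1..d}. bb m (-A2) = 0" using E2 Esg_top[OF lp mon dpos s2] unfolding A2_def by simp
  have t1: "\<forall>m n. A1 < n \<longrightarrow> bb m n = 0" using top_facts(1)[OF s1] unfolding A1_def by simp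
  have t2: "\<forall>m n. A2 < n \<longrightarrow> bb m (-n) = 0" using top_facts(1)[OF s2] unfolding A2_def by simp
  obtain m where "m \<le> d" "bb m A1 \<noteq> 0" using top_facts(2)[OF s1] unfolding A1_def by auto
  then have b01: "bb 0 A1 \<noteq> 0" using z1 by (cases "m = 0") auto
  obtain m' where "m' \<le> d" "bb m' (-A2) \<noteq> 0" using top_facts(2)[OF s2] unfolding A2_def by auto
  then have b02: "bb 0 (-A2) \<noteq> 0" using z2 by (cases "m' = 0") auto
  show ?thesis unfolding pos_exp_iff
  proof (intro exI[of _ K] notI)
    assume "\<exists>e. NEW d (companion_mat \<pi>) K e"
    then obtain e where ec: "\<forall>i. e i \<in> carrier_vec d" and enz: "e \<noteq> zc d"
      and w: "\<forall>l j. \<bar>j\<bar> \<le> int K \<longrightarrow> (F ^^ l) e j = 0\<^sub>v d" unfolding NEW_def by blast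
    define Y where "Y = (\<lambda>l z. (F ^^ l) e z $ (d - 1))"
    have rec: "recur bb d (int K) Y" unfolding Y_def by (rule orbit_recur)
    have win: "\<forall>l z. \<bar>z\<bar> \<le> int K \<longrightarrow> Y l z = 0" unfolding Y_def using w dpos by simp
    have r: "\<forall>l z. - int K \<le> z \<longrightarrow> Y l z = 0"
    proof (rule prop_right[OF rec bnd_bb b02])
      show "\<forall>j< - A2. bb 0 j = 0"
      proof (intro allI impI)
        fix j assume "j < - A2"
        then have "A2 < - j" by simp
        then show "bb 0 j = 0" using t2 by force
      qed
      show "\<forall>m\<in>{1..d}. \<forall>j\<le> - A2. bb m j = 0"
      proof (intro ballI allI impI)
        fix m j assume m: "m \<in> {1..d}" and j: "j \<le> - A2"
        show "bb m j = 0"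
        proof (cases "j = - A2")
          case True then show ?thesis using z2 m by simp
        next
          case False
          then have "A2 < - j" using j by simp
          then show ?thesis using t2 by force
        qed
      qed
      show "\<forall>l z. - int K \<le> z \<and> z \<le> - int K + 2 * int K \<longrightarrow> Y l z = 0" using win by auto
    qed
    have lft: "\<forall>l z. z \<le> int K \<longrightarrow> Y l z = 0"
    proof (rule prop_left[OF rec bnd_bb b01])
      show "\<forall>j>A1. bb 0 j = 0" using t1 by blast
      show "\<forall>m\<in>{1..d}. \<forall>j\<ge>A1. bb m j = 0"
      proof (intro ballI allI impI)
        fix m j assume m: "m \<in> {1..d}" and j: "A1 \<le> j"
        show "bb m j = 0"
        proof (cases "j = A1")
          case True then show ?thesis using z1 m by simp
        next
          case False
          then have "A1 < j" using j by simp
          then show ?thesis using t1 by blast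
        qed
      qed
      show "\<forall>l z. int K - 2 * int K \<le> z \<and> z \<le> int K \<longrightarrow> Y l z = 0" using win by auto
    qed
    have Y0: "\<forall>l z. (F ^^ l) e z $ (d - 1) = 0"
    proof (intro allI)
      fix l z
      show "(F ^^ l) e z $ (d - 1) = 0"
      proof (cases "- int K \<le> z")
        case True then show ?thesis using r unfolding Y_def by blast
      next
        case False then have "z \<le> int K" by simp
        then show ?thesis using lft unfolding Y_def by blast
      qed
    qed
    have "\<forall>l x. \<forall>k<d. (F ^^ l) e x $ k = 0" by (rule claimB[OF Y0])
    then have "\<forall>x. \<forall>k<d. e x $ k = 0" using funpow_0[of F e] by metis
    then have "e = zc d" unfolding zc_def
      using ec by (intro ext eq_vecI) auto
    then show False using enz by simp
  qed
qed

lemma comp_notPE: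
  assumes E: "\<not> (Esg 1 \<pi> \<and> Esg (-1) \<pi>)"
  shows "\<not> pos_expansive_lca d (companion_mat \<pi>)"
proof -
  have s1: "(1::int) = 1 \<or> (1::int) = -1" and s2: "(-1::int) = 1 \<or> (-1::int) = -1" by auto
  have key: "\<exists>e. NEW d (companion_mat \<pi>) R e" for R
  proof (cases "Esg 1 \<pi>")
    case False
    define A where "A = tp 1 \<pi>"
    have "\<not> (\<forall>m\<in>{1..d}. bb m A = 0)" using False Esg_top[OF lp mon dpos s1] unfolding A_def by simp
    then obtain m0 where m0: "m0 \<in> {1..d}" "bb m0 A \<noteq> 0" by blast
    define M1 where "M1 = {m\<in>{1..d}. bb m A \<noteq> 0}"
    define m1 where "m1 = Max M1"
    have fin: "finite M1" unfolding M1_def by simp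
    have m1in: "m1 \<in> M1" unfolding m1_def using fin m0 by (intro Max_in) (auto simp: M1_def)
    have m1max: "\<forall>m. m1 < m \<and> m \<le> d \<longrightarrow> bb m A = 0"
    proof (intro allI impI)
      fix m assume m: "m1 < m \<and> m \<le> d"
      show "bb m A = 0"
      proof (rule ccontr)
        assume "bb m A \<noteq> 0"
        then have "m \<in> M1" using m m1in unfolding M1_def by auto
        then have "m \<le> m1" unfolding m1_def using fin by simp
        then show False using m by simp
      qed
    qed
    have t1: "\<forall>m n. A < n \<longrightarrow> bb m n = 0" using top_facts(1)[OF s1] unfolding A_def by simp
    have AK: "\<bar>A\<bar> \<le> int K" using bb_bound m0 by blast
    obtain y where y: "recur bb d (int K) y" "y 0 (- int R - int K - 1) \<noteq> 0"
      "\<forall>l x. - int R - int K - 1 < x \<longrightarrow> y l x = 0"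
      using construct_left'[where b=bb and J=A and K="int K" and d=d and ?m1.0=m1 and ?c0.0="- int R - int K - 1", OF AK _ _ _ _ m1max] t1 m1in
      unfolding M1_def by auto
    have w: "\<forall>l z. \<bar>z\<bar> \<le> int R + int K \<longrightarrow> y l z = 0" using y(3) by auto
    show ?thesis using G_NEW[OF y(1) w y(2)] by blast
  next
    case True
    then have False2: "\<not> Esg (-1) \<pi>" using E by blast
    define A where "A = tp (-1) \<pi>"
    have "\<not> (\<forall>m\<in>{1..d}. bb m (-A) = 0)" using False2 Esg_top[OF lp mon dpos s2] unfolding A_def by simp
    then obtain m0 where m0: "m0 \<in> {1..d}" "bb m0 (-A) \<noteq> 0" by blast
    define M1 where "M1 = {m\<in>{1..d}. bb m (-A) \<noteq> 0}"
    define m1 where "m1 = Max M1"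
    have fin: "finite M1" unfolding M1_def by simp
    have m1in: "m1 \<in> M1" unfolding m1_def using fin m0 by (intro Max_in) (auto simp: M1_def)
    have m1max: "\<forall>m. m1 < m \<and> m \<le> d \<longrightarrow> bb m (-A) = 0"
    proof (intro allI impI)
      fix m assume m: "m1 < m \<and> m \<le> d"
      show "bb m (-A) = 0"
      proof (rule ccontr)
        assume "bb m (-A) \<noteq> 0"
        then have "m \<in> M1" using m m1in unfolding M1_def by auto
        then have "m \<le> m1" unfolding m1_def using fin by simp
        then show False using m by simp
      qed
    qed
    have t2: "\<forall>m n. A < n \<longrightarrow> bb m (-n) = 0" using top_facts(1)[OF s2] unfolding A_def by simp
    have Jtop: "\<forall>m\<le>d. \<forall>j< -A. bb m j = 0"
    proof (intro allI impI)
      fix m j assume "m \<le> d" "j < - A"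
      then have "A < - j" by simp
      then show "bb m j = 0" using t2 by force
    qed
    have AK: "\<bar>-A\<bar> \<le> int K" using bb_bound m0 by blast
    obtain y where y: "recur bb d (int K) y" "y 0 (int R + int K + 1) \<noteq> 0"
      "\<forall>l x. x < int R + int K + 1 \<longrightarrow> y l x = 0"
      using construct_right[where b=bb and J="-A" and K="int K" and d=d and ?m1.0=m1 and ?c0.0="int R + int K + 1", OF AK Jtop _ _ _ m1max] m1in
      unfolding M1_def by auto
    have w: "\<forall>l z. \<bar>z\<bar> \<le> int R + int K \<longrightarrow> y l z = 0" using y(3) by auto
    show ?thesis using G_NEW[OF y(1) w y(2)] by blast
  qed
  then show ?thesis unfolding pos_exp_iff by blast
qed

theorem comp_PE: "pos_expansive_lca d (companion_mat \<pi>) \<longleftrightarrow> Esg 1 \<pi> \<and> Esg (-1) \<pi>"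
  using comp_PE_if comp_notPE by blast

end

lemma lead_coeff_prod_list_1:
  fixes ps :: "'a::idom poly list"
  assumes "\<And>p. p \<in> set ps \<Longrightarrow> lead_coeff p = 1"
  shows "lead_coeff (prod_list ps) = 1"
  using assms by (induct ps) (auto simp: lead_coeff_mult)

lemma degree_prod_list_monic:
  fixes ps :: "'a::idom poly list"
  assumes "\<And>p. p \<in> set ps \<Longrightarrow> lead_coeff p = 1"
  shows "degree (prod_list ps) = sum_list (map degree ps)"
  using assms
proof (induct ps)
  case (Cons p ps)
  have "lead_coeff (prod_list ps) = 1" using Cons.prems lead_coeff_prod_list_1 by auto
  then have "prod_list ps \<noteq> 0" by (intro notI) (simp del: prod_list_zero_iff)
  moreover have "lead_coeff p = 1" using Cons.prems by simp
  then have "p \<noteq> 0" by (intro notI) simp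
  ultimately show ?case using Cons by (simp add: degree_mult_eq)
qed simp

lemma expansive_prod_iff:
  fixes ps :: "'a::field fls poly list"
  assumes ps: "\<And>p. p \<in> set ps \<Longrightarrow> is_lp_tpoly p \<and> lead_coeff p = 1 \<and> 0 < degree p"
    and ne: "ps \<noteq> []"
  shows "expansive_poly (prod_list ps) \<longleftrightarrow> (\<forall>p\<in>set ps. Esg 1 p \<and> Esg (-1) p)"
proof -
  have s1: "(1::int) = 1 \<or> (1::int) = -1" and s2: "(-1::int) = 1 \<or> (-1::int) = -1" by auto
  let ?P = "prod_list ps"
  have lpP: "is_lp_tpoly ?P" using ps is_lp_tpoly_prod_list by blast
  have mP: "lead_coeff ?P = 1" using ps lead_coeff_prod_list_1 by blast
  have dP: "0 < degree ?P"
  proof -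
    obtain p where p: "p \<in> set ps" using ne by (cases ps) auto
    have "degree p \<le> sum_list (map degree ps)"
      using p by (simp add: member_le_sum_list)
    then show ?thesis using degree_prod_list_monic[of ps] ps p by fastforce
  qed
  have nz: "\<And>p. p \<in> set ps \<Longrightarrow> is_lp_tpoly p \<and> p \<noteq> 0" using ps by fastforce
  have "expansive_poly ?P \<longleftrightarrow> Esg 1 ?P \<and> Esg (-1) ?P"
    using lpP mP unfolding expansive_poly_iff by simp
  also have "\<dots> \<longleftrightarrow> degree (TF 1 ?P) = 0 \<and> degree (TF (-1) ?P) = 0"
    using Esg_iff_TF[OF lpP mP dP s1] Esg_iff_TF[OF lpP mP dP s2] by simp
  also have "\<dots> \<longleftrightarrow> (\<forall>p\<in>set ps. degree (TF 1 p) = 0) \<and> (\<forall>p\<in>set ps. degree (TF (-1) p) = 0)"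
    using degree_TF_prod_list[OF s1 nz] degree_TF_prod_list[OF s2 nz] by simp
  also have "\<dots> \<longleftrightarrow> (\<forall>p\<in>set ps. Esg 1 p \<and> Esg (-1) p)"
    using ps Esg_iff_TF[OF _ _ _ s1] Esg_iff_TF[OF _ _ _ s2] by auto
  finally show ?thesis .
qed

theorem lemma12:
  fixes C :: "'p::prime_card mod_ring fls mat" and n :: nat
  assumes "n > 1"
    and "C \<in> carrier_mat n n"
    and "rational_canonical_form C"
  shows "pos_expansive_lca n C \<longleftrightarrow> expansive_mat C"
proof -
  obtain \<pi>s where ps: "\<forall>\<pi>\<in>set \<pi>s. is_lp_tpoly \<pi> \<and> lead_coeff \<pi> = 1 \<and> degree \<pi> > 0"
    and C: "C = diag_block_mat (map companion_mat \<pi>s)"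
    using assms(3) unfolding rational_canonical_form_def by blast
  let ?Cs = "map companion_mat \<pi>s"
  have sq: "\<And>A. A \<in> set ?Cs \<Longrightarrow> dim_row A = dim_col A" by auto
  have "dim_row C = sum_list (map dim_row ?Cs)" unfolding C by (rule dim_diag_block_mat)
  then have n: "n = sum_list (map dim_row ?Cs)" using assms(2) by simp
  have ne: "\<pi>s \<noteq> []" using n assms(1) by auto
  have "pos_expansive_lca n C \<longleftrightarrow> (\<forall>A\<in>set ?Cs. pos_expansive_lca (dim_row A) A)"
    unfolding n C by (rule PE_diag_block[OF sq])
  also have "\<dots> \<longleftrightarrow> (\<forall>\<pi>\<in>set \<pi>s. pos_expansive_lca (degree \<pi>) (companion_mat \<pi>))" by simp
  also have "\<dots> \<longleftrightarrow> (\<forall>\<pi>\<in>set \<pi>s. Esg 1 \<pi> \<and> Esg (-1) \<pi>)"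
  proof (intro ball_cong refl)
    fix \<pi> assume "\<pi> \<in> set \<pi>s"
    then have h: "is_lp_tpoly \<pi>" "lead_coeff \<pi> = 1" "0 < degree \<pi>" using ps by auto
    obtain K where K: "cbound \<pi> K" using lp_tpoly_cbound[OF h(1)] by blast
    interpret comp \<pi> K using h K by unfold_locales
    show "pos_expansive_lca (degree \<pi>) (companion_mat \<pi>) \<longleftrightarrow> Esg 1 \<pi> \<and> Esg (-1) \<pi>" by (rule comp_PE)
  qed
  also have "\<dots> \<longleftrightarrow> expansive_poly (prod_list \<pi>s)"
    using expansive_prod_iff[of \<pi>s] ps ne by auto
  also have "prod_list \<pi>s = char_poly C"
  proof -
    have "char_poly C = prod_list (map char_poly ?Cs)" unfolding C by (rule char_poly_diag_block_mat[OF sq])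
    also have "map char_poly ?Cs = \<pi>s"
      using ps by (induct \<pi>s) (auto simp: char_poly_companion)
    finally show ?thesis by simp
  qed
  finally show ?thesis unfolding expansive_mat_def .
qed


end
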